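(* Let $1\le k<\lfloor n/2\rfloor$. Then $$\operatorname{Hdepth}_1M(n,k)\le n-\left\lceil\frac{n-k}{k+1}\right\rceil.$$
   Context: $K$ is a field, $R=K[X_1,\dots,X_n]$ with the standard grading ($\deg X_i=1$). $M(n,k)$ is the $k$-th syzygy module of $K=R/(X_1,\dots,X_n)$ in the Koszul complex: the image of $\partial:\bigwedge^kR^n\to\bigwedge^{k-1}R^n$, $\partial(e_{i_1}\wedge\dots\wedge e_{i_k})=\sum_{r=1}^k(-1)^{r+1}X_{i_r}e_{i_1}\wedge\dots\widehat{e_{i_r}}\dots\wedge e_{i_k}$, where $e_{i_1}\wedge\dots\wedge e_{i_k}$ has degree $k$. A graded retract of $R$ is a $K$-subalgebra generated by a set of linear forms. A Hilbert decomposition of $M$ is a finite family $(S_i,s_i)$, $s_i\in\mathbb{Z}$, $S_i$ graded retracts, with $M\cong\bigoplus_iS_i(-s_i)$ as graded $K$-vector spaces; its depth is $\min_i\dim S_i$; $\operatorname{Hdepth}_1M$ is the maximal depth of such a decomposition. *)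

theory Defs
  imports Complex_Main "HOL-Library.Poly_Mapping"
begin

(* The variable X_i (i = 1..n in the paper) is index i-1 here (indices 0..<n).*)

type_synonym 'a mpoly = "(nat \<Rightarrow>\<^sub>0 nat) \<Rightarrow>\<^sub>0 'a"

definition mpVar :: "nat \<Rightarrow> 'a::field mpoly" where
  "mpVar i = Poly_Mapping.single (Poly_Mapping.single i 1) 1"

definition mpConst :: "'a::field \<Rightarrow> 'a mpoly" where
  "mpConst c = Poly_Mapping.single 0 c"

definition mon_deg :: "(nat \<Rightarrow>\<^sub>0 nat) \<Rightarrow> nat" where
  "mon_deg m = (\<Sum>i\<in>Poly_Mapping.keys m. Poly_Mapping.lookup m i)"

definition in_R :: "nat \<Rightarrow> 'a::field mpoly \<Rightarrow> bool" where
  "in_R n p \<longleftrightarrow> (\<forall>m\<in>Poly_Mapping.keys p. Poly_Mapping.keys m \<subseteq> {..<n})"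

(* p is homogeneous of (integer) degree d (0 is homogeneous of every degree)*)
definition homog :: "int \<Rightarrow> 'a::field mpoly \<Rightarrow> bool" where
  "homog d p \<longleftrightarrow> (\<forall>m\<in>Poly_Mapping.keys p. int (mon_deg m) = d)"

(* Elements of the free module \<And>^{k-1} R^n are represented as coefficient
  functions I \<mapsto> f_I on index sets I (basis element e_I, I a (k-1)-subset).
  koszul_coeff J I is the coefficient of e_I in \<partial>(e_J):
  if J = I \<union> {j}, j \<notin> I, then (-1)^(r+1) X_j where r is the position of j in J.*)
definition koszul_coeff :: "nat set \<Rightarrow> nat set \<Rightarrow> 'a::field mpoly" where
  "koszul_coeff J I =
     (if I \<subseteq> J \<and> card (J - I) = 1
      then mpConst ((-1) ^ card {i\<in>J. i < the_elem (J - I)}) * mpVar (the_elem (J - I))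
      else 0)"

(* M(n,k) = image of \<partial> : \<And>^k R^n \<rightarrow> \<And>^{k-1} R^n*)
definition syz :: "nat \<Rightarrow> nat \<Rightarrow> (nat set \<Rightarrow> 'a::field mpoly) set" where
  "syz n k = {v. \<exists>a. (\<forall>J. in_R n (a J)) \<and>
      v = (\<lambda>I. \<Sum>J\<in>{J. J \<subseteq> {..<n} \<and> card J = k}. a J * koszul_coeff J I)}"

(* Degree d component of M(n,k); e_I (|I| = k-1) has degree k-1.*)
definition syz_piece :: "nat \<Rightarrow> nat \<Rightarrow> int \<Rightarrow> (nat set \<Rightarrow> 'a::field mpoly) set" where
  "syz_piece n k d = {v\<in>syz n k. \<forall>I. homog (d - (int k - 1)) (v I)}"

inductive_set alg_gen :: "'a::field mpoly set \<Rightarrow> 'a mpoly set" for G where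
  const: "mpConst c \<in> alg_gen G"
| gen: "g \<in> G \<Longrightarrow> g \<in> alg_gen G"
| add: "p \<in> alg_gen G \<Longrightarrow> q \<in> alg_gen G \<Longrightarrow> p + q \<in> alg_gen G"
| mult: "p \<in> alg_gen G \<Longrightarrow> q \<in> alg_gen G \<Longrightarrow> p * q \<in> alg_gen G"

definition linear_forms :: "nat \<Rightarrow> 'a::field mpoly set" where
  "linear_forms n = {p. in_R n p \<and> homog 1 p}"

definition graded_retract :: "nat \<Rightarrow> 'a::field mpoly set \<Rightarrow> bool" where
  "graded_retract n S \<longleftrightarrow> (\<exists>G \<subseteq> linear_forms n. S = alg_gen G)"

definition piece :: "'a::field mpoly set \<Rightarrow> int \<Rightarrow> 'a mpoly set" where
  "piece S d = {p\<in>S. homog d p}"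

(* Dimension of a graded retract S (a polynomial ring over K in as many
  variables as the K-dimension of its space of linear forms S_1).*)
definition retract_dim :: "'a::field mpoly set \<Rightarrow> nat" where
  "retract_dim S = vector_space.dim (\<lambda>c p. mpConst c * p) (piece S 1)"

(* A Hilbert decomposition of M(n,k): a finite family (S_i, s_i), given as a list,
  with M \<cong> \<Oplus>_i S_i(-s_i) as graded K-vector spaces, i.e. for every degree d a
  K-linear bijection M_d \<rightarrow> \<Oplus>_i (S_i)_{d - s_i}.*)
definition dsum_piece :: "('a::field mpoly set \<times> int) list \<Rightarrow> int \<Rightarrow> (nat \<Rightarrow> 'a mpoly) set" where
  "dsum_piece D d = {g. (\<forall>i<length D. g i \<in> piece (fst (D ! i)) (d - snd (D ! i)))
                       \<and> (\<forall>i\<ge>length D. g i = 0)}"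

definition hilbert_decomp :: "nat \<Rightarrow> nat \<Rightarrow> ('a::field mpoly set \<times> int) list \<Rightarrow> bool" where
  "hilbert_decomp n k D \<longleftrightarrow>
     (\<forall>i<length D. graded_retract n (fst (D ! i))) \<and>
     (\<forall>d::int. \<exists>f. bij_betw f (syz_piece n k d) (dsum_piece D d) \<and>
        (\<forall>x\<in>syz_piece n k d. \<forall>y\<in>syz_piece n k d.
            f (\<lambda>I. x I + y I) = (\<lambda>i. f x i + f y i)) \<and>
        (\<forall>c. \<forall>x\<in>syz_piece n k d. f (\<lambda>I. mpConst c * x I) = (\<lambda>i. mpConst c * f x i)))"

definition decomp_depth :: "('a::field mpoly set \<times> int) list \<Rightarrow> nat" where
  "decomp_depth D = Min {retract_dim (fst (D ! i)) | i. i < length D}"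

(* Hdepth_1 M(n,k): the maximal depth of a Hilbert decomposition. The type
  argument fixes the field K.*)
definition Hdepth1_syz :: "'a::field itself \<Rightarrow> nat \<Rightarrow> nat \<Rightarrow> nat" where
  "Hdepth1_syz _ n k = Max {decomp_depth D | D :: ('a mpoly set \<times> int) list. hilbert_decomp n k D}"

end

theory Submission
  imports Defs "HOL-Library.Function_Algebras"
begin


lemma sum_fun_apply: "(\<Sum>x\<in>A. f x) i = (\<Sum>x\<in>A. f x i)"
  by (induction A rule: infinite_finite_induct) auto

lemma poly_expand: "(p :: 'b \<Rightarrow>\<^sub>0 'c::comm_monoid_add) = (\<Sum>m\<in>Poly_Mapping.keys p. Poly_Mapping.single m (Poly_Mapping.lookup p m))"
proof (rule poly_mapping_eqI)
  fix w
  have "Poly_Mapping.lookup (\<Sum>m\<in>Poly_Mapping.keys p. Poly_Mapping.single m (Poly_Mapping.lookup p m)) w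
     = (\<Sum>m\<in>Poly_Mapping.keys p. (Poly_Mapping.lookup p m when m = w))"
    by (simp add: lookup_sum lookup_single)
  also have "\<dots> = Poly_Mapping.lookup p w"
    by (cases "w \<in> Poly_Mapping.keys p") (auto simp: when_def in_keys_iff)
  finally show "Poly_Mapping.lookup p w = Poly_Mapping.lookup (\<Sum>m\<in>Poly_Mapping.keys p. Poly_Mapping.single m (Poly_Mapping.lookup p m)) w" by simp
qed

lemma lookup_mult_single_shift:
  fixes p :: "'a::field mpoly"
  shows "Poly_Mapping.lookup (p * Poly_Mapping.single m c) (x + m) = Poly_Mapping.lookup p x * c"
proof -
  have "Poly_Mapping.lookup (p * Poly_Mapping.single m c) (x + m)
     = (\<Sum>l. Poly_Mapping.lookup p l * (\<Sum>q. (c when m = q) when x + m = l + q))"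
    by (simp add: lookup_mult lookup_single)
  also have "\<dots> = (\<Sum>l. Poly_Mapping.lookup p l * (c when x + m = l + m))"
  proof -
    have "(\<Sum>q. (c when m = q) when x + m = l + q) = (c when x + m = l + m)" for l
    proof -
      have "(\<lambda>q. (c when m = q) when x + m = l + q) = (\<lambda>q. if m = q then (c when x + m = l + q) else 0)"
        by (auto simp: when_def fun_eq_iff)
      then show ?thesis by (simp only:) (rule Sum_any.delta')
    qed
    then show ?thesis by simp
  qed
  also have "\<dots> = (\<Sum>l. (Poly_Mapping.lookup p l * c when l = x))"
    by (intro Sum_any.cong) (auto simp: when_def)
  also have "\<dots> = Poly_Mapping.lookup p x * c" by simp
  finally show ?thesis .
qed

lemma lookup_mult_single_zero:
  fixes p :: "'a::field mpoly"
  assumes "\<And>x. w \<noteq> x + m"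
  shows "Poly_Mapping.lookup (p * Poly_Mapping.single m c) w = 0"
proof (rule ccontr)
  assume "Poly_Mapping.lookup (p * Poly_Mapping.single m c) w \<noteq> 0"
  then have "w \<in> Poly_Mapping.keys (p * Poly_Mapping.single m c)" by (simp add: in_keys_iff)
  then show False using keys_mult[of p "Poly_Mapping.single m c"] assms
    by (auto split: if_splits)
qed

lemma mpConst_mult: "mpConst a * mpConst b = mpConst (a * b)"
  by (simp add: mpConst_def mult_single)
lemma mpConst_one[simp]: "mpConst 1 = 1" by (simp add: mpConst_def)
lemma mpConst_zero[simp]: "mpConst 0 = 0" by (simp add: mpConst_def)
lemma mpConst_add: "mpConst (a + b) = mpConst a + mpConst b" by (simp add: mpConst_def single_add)
lemma mpConst_mpVar: "mpConst c * mpVar j = Poly_Mapping.single (Poly_Mapping.single j 1) c"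
  by (simp add: mpConst_def mpVar_def mult_single)
lemma mpConst_single: "mpConst c * Poly_Mapping.single m a = Poly_Mapping.single m (c * a)"
  by (simp add: mpConst_def mult_single)
lemma mpConst_eq0[simp]: "mpConst c = 0 \<longleftrightarrow> c = 0"
  by (metis lookup_single_eq lookup_zero mpConst_def mpConst_zero)

lemma vs_mpoly: "vector_space (\<lambda>c (p::'a::field mpoly). mpConst c * p)"
  by unfold_locales (auto simp: algebra_simps mpConst_add mpConst_mult[symmetric])

lemma vs_fun: "vector_space (\<lambda>c (v::'b \<Rightarrow> 'a::field mpoly). (\<lambda>i. mpConst c * v i))"
  by unfold_locales (auto simp: algebra_simps mpConst_add mpConst_mult[symmetric] fun_eq_iff)

lemma mon_deg_superset: "finite S \<Longrightarrow> Poly_Mapping.keys m \<subseteq> S \<Longrightarrow> mon_deg m = (\<Sum>i\<in>S. Poly_Mapping.lookup m i)"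
  unfolding mon_deg_def by (rule sum.mono_neutral_left) (auto simp: in_keys_iff)

lemma mon_deg_add: "mon_deg (a + b) = mon_deg a + mon_deg b"
proof -
  let ?S = "Poly_Mapping.keys a \<union> Poly_Mapping.keys b"
  have "mon_deg (a + b) = (\<Sum>i\<in>?S. Poly_Mapping.lookup (a+b) i)"
    using keys_add[of a b] by (intro mon_deg_superset) auto
  also have "\<dots> = (\<Sum>i\<in>?S. Poly_Mapping.lookup a i) + (\<Sum>i\<in>?S. Poly_Mapping.lookup b i)"
    by (simp add: lookup_add sum.distrib)
  also have "\<dots> = mon_deg a + mon_deg b"
    by (subst (1 2) mon_deg_superset[where S="?S"]) auto
  finally show ?thesis .
qed

lemma mon_deg_single[simp]: "mon_deg (Poly_Mapping.single j (1::nat)) = 1"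
  by (simp add: mon_deg_def)

lemma mon_deg_zero[simp]: "mon_deg 0 = 0" by (simp add: mon_deg_def)

lemma mon_deg_eq0: "mon_deg m = 0 \<Longrightarrow> m = 0"
  unfolding mon_deg_def by (metis (no_types, lifting) finite_keys in_keys_iff keys_eq_empty sum_eq_0_iff ex_in_conv)



definition supp_in :: "nat set \<Rightarrow> 'a::field mpoly \<Rightarrow> bool" where
  "supp_in A p \<longleftrightarrow> (\<forall>m\<in>Poly_Mapping.keys p. Poly_Mapping.keys m \<subseteq> A)"

lemma in_R_supp: "in_R n p = supp_in {..<n} p"
  by (simp add: in_R_def supp_in_def)

lemma supp_in_0[simp]: "supp_in A 0" by (simp add: supp_in_def)
lemma supp_in_add: "supp_in A p \<Longrightarrow> supp_in A q \<Longrightarrow> supp_in A (p + q)"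
  using keys_add[of p q] by (auto simp: supp_in_def)
lemma supp_in_sum: "(\<And>x. x \<in> S \<Longrightarrow> supp_in A (f x)) \<Longrightarrow> supp_in A (\<Sum>x\<in>S. f x)"
  by (induction S rule: infinite_finite_induct) (auto intro: supp_in_add)
lemma supp_in_uminus: "supp_in A p \<Longrightarrow> supp_in A (- p)"
  by (simp add: supp_in_def)
lemma supp_in_diff: "supp_in A p \<Longrightarrow> supp_in A q \<Longrightarrow> supp_in A (p - q)"
  by (metis diff_conv_add_uminus supp_in_add supp_in_uminus)
lemma supp_in_mult: "supp_in A p \<Longrightarrow> supp_in A q \<Longrightarrow> supp_in A (p * q)"
proof -
  assume a: "supp_in A p" "supp_in A q"
  show ?thesis unfolding supp_in_def
  proof
    fix m assume "m \<in> Poly_Mapping.keys (p * q)"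
    then obtain a b where "m = a + b" "a \<in> Poly_Mapping.keys p" "b \<in> Poly_Mapping.keys q"
      using keys_mult[of p q] by blast
    then show "Poly_Mapping.keys m \<subseteq> A" using a keys_add[of a b] unfolding supp_in_def by blast
  qed
qed
lemma supp_in_single: "Poly_Mapping.keys m \<subseteq> A \<Longrightarrow> supp_in A (Poly_Mapping.single m c)"
  by (simp add: supp_in_def)
lemma supp_in_mpConst: "supp_in A (mpConst c)"
  by (simp add: mpConst_def supp_in_def)
lemma supp_in_mpConst_mult: "supp_in A p \<Longrightarrow> supp_in A (mpConst c * p)"
  by (simp add: supp_in_mpConst supp_in_mult)
lemma supp_in_mono: "supp_in A p \<Longrightarrow> A \<subseteq> B \<Longrightarrow> supp_in B p"
  by (auto simp: supp_in_def)
lemma supp_in_mpVar: "j \<in> A \<Longrightarrow> supp_in A (mpVar j)"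
  by (simp add: mpVar_def supp_in_def)

lemma homog_0[simp]: "homog d 0" by (simp add: homog_def)
lemma homog_add: "homog d p \<Longrightarrow> homog d q \<Longrightarrow> homog d (p + q)"
  using keys_add[of p q] by (auto simp: homog_def)
lemma homog_sum: "(\<And>x. x \<in> S \<Longrightarrow> homog d (f x)) \<Longrightarrow> homog d (\<Sum>x\<in>S. f x)"
  by (induction S rule: infinite_finite_induct) (auto intro: homog_add)
lemma homog_uminus: "homog d p \<Longrightarrow> homog d (- p)"
  by (simp add: homog_def)
lemma homog_diff: "homog d p \<Longrightarrow> homog d q \<Longrightarrow> homog d (p - q)"
  by (metis diff_conv_add_uminus homog_add homog_uminus)
lemma homog_mult: "homog a p \<Longrightarrow> homog b q \<Longrightarrow> homog (a + b) (p * q)"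
proof -
  assume h: "homog a p" "homog b q"
  show ?thesis unfolding homog_def
  proof
    fix m assume "m \<in> Poly_Mapping.keys (p * q)"
    then obtain x y where "m = x + y" "x \<in> Poly_Mapping.keys p" "y \<in> Poly_Mapping.keys q"
      using keys_mult[of p q] by blast
    then show "int (mon_deg m) = a + b" using h by (auto simp: homog_def mon_deg_add)
  qed
qed
lemma homog_single: "int (mon_deg m) = d \<Longrightarrow> homog d (Poly_Mapping.single m c)"
  by (simp add: homog_def)
lemma homog_mpConst: "homog 0 (mpConst c)"
  by (simp add: mpConst_def homog_def)
lemma homog_mpConst_mult: "homog d p \<Longrightarrow> homog d (mpConst c * p)"
  using homog_mult[OF homog_mpConst[of c], of d p] by simp
lemma homog_mpVar: "homog 1 (mpVar j)"
  using mon_deg_single[of j] by (simp add: mpVar_def homog_def)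

lemma homog_neg: "d < 0 \<Longrightarrow> homog d p \<Longrightarrow> p = 0"
  by (metis homog_def ex_in_conv keys_eq_empty of_nat_0_le_iff not_le)

lemma homog_unique: "homog d p \<Longrightarrow> homog d' p \<Longrightarrow> d \<noteq> d' \<Longrightarrow> p = 0"
  by (metis homog_def ex_in_conv keys_eq_empty)

lemma homog0_const: "homog 0 p \<Longrightarrow> p = mpConst (Poly_Mapping.lookup p 0)"
proof -
  assume h: "homog 0 p"
  have "Poly_Mapping.keys p \<subseteq> {0}"
    using h mon_deg_eq0 by (auto simp: homog_def)
  show ?thesis
  proof (rule poly_mapping_eqI)
    fix w show "Poly_Mapping.lookup p w = Poly_Mapping.lookup (mpConst (Poly_Mapping.lookup p 0)) w"
      using \<open>Poly_Mapping.keys p \<subseteq> {0}\<close>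
      by (cases "w = 0") (auto simp: mpConst_def lookup_single in_keys_iff)
  qed
qed

definition hc :: "int \<Rightarrow> 'a::field mpoly \<Rightarrow> 'a mpoly" where
  "hc e p = (\<Sum>m\<in>{m\<in>Poly_Mapping.keys p. int (mon_deg m) = e}. Poly_Mapping.single m (Poly_Mapping.lookup p m))"

lemma lookup_hc: "Poly_Mapping.lookup (hc e p) w = (if int (mon_deg w) = e then Poly_Mapping.lookup p w else 0)"
proof -
  have "Poly_Mapping.lookup (hc e p) w = (\<Sum>m\<in>{m\<in>Poly_Mapping.keys p. int (mon_deg m) = e}. (Poly_Mapping.lookup p m when m = w))"
    by (simp add: hc_def lookup_sum lookup_single)
  also have "\<dots> = (if int (mon_deg w) = e then Poly_Mapping.lookup p w else 0)"
    by (cases "w \<in> Poly_Mapping.keys p") (auto simp: when_def in_keys_iff)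
  finally show ?thesis .
qed

lemma hc_add: "hc e (p + q) = hc e p + hc e q"
  by (rule poly_mapping_eqI) (simp add: lookup_hc lookup_add)
lemma hc_zero[simp]: "hc e 0 = 0" by (simp add: hc_def)
lemma hc_sum: "hc e (\<Sum>x\<in>S. f x) = (\<Sum>x\<in>S. hc e (f x))"
  by (induction S rule: infinite_finite_induct) (simp_all add: hc_add)
lemma hc_id: "homog e p \<Longrightarrow> hc e p = p"
  by (rule poly_mapping_eqI) (auto simp: lookup_hc homog_def in_keys_iff)
lemma homog_hc: "homog e (hc e p)"
  by (auto simp: homog_def in_keys_iff lookup_hc split: if_splits)
lemma supp_in_hc: "supp_in A p \<Longrightarrow> supp_in A (hc e p)"
  by (auto simp: supp_in_def in_keys_iff lookup_hc split: if_splits)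

lemma hc_mult_single: "hc (e + int (mon_deg m)) (p * Poly_Mapping.single m c) = hc e p * Poly_Mapping.single m c"
proof (rule poly_mapping_eqI)
  fix w
  show "Poly_Mapping.lookup (hc (e + int (mon_deg m)) (p * Poly_Mapping.single m c)) w =
        Poly_Mapping.lookup (hc e p * Poly_Mapping.single m c) w"
  proof (cases "\<exists>x. w = x + m")
    case True
    then obtain x where w: "w = x + m" by blast
    show ?thesis unfolding w lookup_hc lookup_mult_single_shift by (simp add: mon_deg_add)
  next
    case False
    then show ?thesis by (simp add: lookup_hc lookup_mult_single_zero)
  qed
qed



abbreviation var1 :: "nat \<Rightarrow> nat \<Rightarrow>\<^sub>0 nat" where "var1 j \<equiv> Poly_Mapping.single j 1"

definition sgnv :: "nat set \<Rightarrow> nat \<Rightarrow> 'a::field" where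
  "sgnv S j = (-1) ^ card {i\<in>S. i < j}"

lemma sgnv_nz[simp]: "sgnv S j \<noteq> 0" by (simp add: sgnv_def)

lemma KC1: "finite J \<Longrightarrow> j \<in> J \<Longrightarrow> koszul_coeff J (J - {j}) = Poly_Mapping.single (var1 j) (sgnv J j)"
proof -
  assume "finite J" "j \<in> J"
  then have "J - (J - {j}) = {j}" by auto
  then show ?thesis by (simp add: koszul_coeff_def mpConst_mpVar sgnv_def)
qed

lemma KC0: "finite J \<Longrightarrow> \<not> (\<exists>j\<in>J. I = J - {j}) \<Longrightarrow> koszul_coeff J I = 0"
proof -
  assume f: "finite J" and n: "\<not> (\<exists>j\<in>J. I = J - {j})"
  show ?thesis
  proof (cases "I \<subseteq> J \<and> card (J - I) = 1")
    case True
    then obtain j where "J - I = {j}" by (auto simp: card_Suc_eq)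
    then have "j \<in> J" "I = J - {j}" using True by auto
    then show ?thesis using n by blast
  next
    case False then show ?thesis unfolding koszul_coeff_def by (rule if_not_P)
  qed
qed

definition Ks :: "nat \<Rightarrow> nat \<Rightarrow> nat set set" where
  "Ks n k = {J. J \<subseteq> {..<n} \<and> card J = k}"

lemma finite_Ks[simp]: "finite (Ks n k)"
  unfolding Ks_def by (rule finite_subset[of _ "Pow {..<n}"]) auto

lemma Ks_finite: "J \<in> Ks n k \<Longrightarrow> finite J"
  unfolding Ks_def using finite_subset by auto

lemma card_Ks: "card (Ks n k) = n choose k"
  unfolding Ks_def using n_subsets[of "{..<n}" k] by simp

definition Phi :: "nat \<Rightarrow> nat \<Rightarrow> (nat set \<Rightarrow> 'a::field mpoly) \<Rightarrow> (nat set \<Rightarrow> 'a mpoly)" where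
  "Phi n k a = (\<lambda>I. \<Sum>J\<in>Ks n k. a J * koszul_coeff J I)"

lemma syz_eq: "syz n k = {Phi n k a | a. \<forall>J. in_R n (a J)}"
  by (auto simp: syz_def Phi_def Ks_def)

lemma Phi_add: "Phi n k (a + b) = Phi n k a + Phi n k b"
  by (auto simp: Phi_def fun_eq_iff algebra_simps sum.distrib)
lemma Phi_scale: "Phi n k (\<lambda>J. mpConst c * a J) = (\<lambda>I. mpConst c * Phi n k a I)"
  by (auto simp: Phi_def fun_eq_iff algebra_simps sum_distrib_left)
lemma Phi_zero[simp]: "Phi n k 0 = 0"
  by (auto simp: Phi_def fun_eq_iff)
lemma Phi_uminus: "Phi n k (- a) = - Phi n k a"
  by (auto simp: Phi_def fun_eq_iff sum_negf)
lemma Phi_diff: "Phi n k (a - b) = Phi n k a - Phi n k b"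
  by (auto simp: Phi_def fun_eq_iff algebra_simps sum_subtractf)
lemma Phi_sum: "Phi n k (\<Sum>x\<in>S. f x) = (\<Sum>x\<in>S. Phi n k (f x))"
proof (induction S rule: infinite_finite_induct)
  case (infinite A) then show ?case by (simp only: sum.infinite[OF infinite] Phi_zero)
next
  case empty then show ?case by (simp only: sum.empty Phi_zero)
next
  case (insert x F) then show ?case by (simp only: sum.insert[OF insert(1,2)] Phi_add)
qed
lemma Phi_cong: "(\<And>J. J \<in> Ks n k \<Longrightarrow> a J = b J) \<Longrightarrow> Phi n k a = Phi n k b"
  by (auto simp: Phi_def)

lemma IND:
  assumes k: "1 \<le> k"
    and good: "\<And>J. J \<in> Ks n k \<Longrightarrow> supp_in {Min J..<n} (b J)"
    and z: "Phi n k (b :: nat set \<Rightarrow> 'a::field mpoly) = 0"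
  shows "\<forall>J\<in>Ks n k. b J = 0"
proof (rule ccontr)
  assume nt: "\<not> (\<forall>J\<in>Ks n k. b J = 0)"
  define S where "S = {J\<in>Ks n k. b J \<noteq> 0}"
  have "S \<noteq> {}" "finite S" using nt by (auto simp: S_def)
  define mx where "mx = Max (Min ` S)"
  have "mx \<in> Min ` S" using Max_in[of "Min ` S"] \<open>S \<noteq> {}\<close> \<open>finite S\<close> unfolding mx_def by blast
  then obtain J where JS: "J \<in> S" and Jmx: "Min J = mx" by blast
  have maxi: "J' \<in> S \<Longrightarrow> Min J' \<le> Min J" for J'
    using \<open>finite S\<close> Jmx unfolding mx_def by auto
  have JK: "J \<in> Ks n k" and bJ: "b J \<noteq> 0" using JS by (auto simp: S_def)
  have fJ: "finite J" using JK by (rule Ks_finite)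
  have neJ: "J \<noteq> {}" using JK k by (auto simp: Ks_def)
  define j0 where "j0 = Min J"
  have j0J: "j0 \<in> J" using fJ neJ by (simp add: j0_def)
  have j0le: "x \<in> J \<Longrightarrow> j0 \<le> x" for x using fJ by (simp add: j0_def)
  obtain u where u: "u \<in> Poly_Mapping.keys (b J)" using bJ by (metis ex_in_conv keys_eq_empty)
  have ukeys: "Poly_Mapping.keys u \<subseteq> {j0..<n}" using good[OF JK] u by (auto simp: supp_in_def j0_def)
  define I where "I = J - {j0}"
  define w where "w = u + var1 j0"
  have other: "Poly_Mapping.lookup (b J' * koszul_coeff J' I) w = 0" if J'K: "J' \<in> Ks n k" and ne: "J' \<noteq> J" for J'
  proof (cases "b J' = 0")
    case False
    then have J'S: "J' \<in> S" using J'K by (simp add: S_def)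
    have fJ': "finite J'" using J'K by (rule Ks_finite)
    show ?thesis
    proof (cases "\<exists>j\<in>J'. I = J' - {j}")
      case False then show ?thesis using KC0[OF fJ' False] by (metis mult_zero_right lookup_zero)
    next
      case True
      then obtain j' where j'J': "j' \<in> J'" and IJ': "I = J' - {j'}" by blast
      have J'eq: "J' = insert j' I" using j'J' IJ' by auto
      have Jeq: "J = insert j0 I" using j0J I_def by auto
      have "j' \<noteq> j0" using J'eq Jeq ne by auto
      have "j' < j0"
      proof (rule ccontr)
        assume "\<not> j' < j0"
        then have gt: "j0 < j'" using \<open>j' \<noteq> j0\<close> by simp
        have neJ': "J' \<noteq> {}" using j'J' by auto
        have m1: "Min J' \<in> J'" using fJ' neJ' by simp
        have m2: "Min J' \<le> j0" using maxi[OF J'S] by (simp add: j0_def)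
        then have "Min J' \<noteq> j'" using gt by simp
        then have "Min J' \<in> I" using m1 J'eq by auto
        then have "Min J' \<in> J" "Min J' \<noteq> j0" using I_def by auto
        then show False using j0le m2 by fastforce
      qed
      have wx: "w \<noteq> x + var1 j'" for x
      proof
        assume "w = x + var1 j'"
        then have "Poly_Mapping.lookup w j' = Poly_Mapping.lookup (x + var1 j') j'" by simp
        moreover have "Poly_Mapping.lookup w j' = 0"
          using ukeys \<open>j' < j0\<close> \<open>j' \<noteq> j0\<close>
          by (auto simp: w_def lookup_add lookup_single in_keys_iff when_def)
        ultimately show False by (simp add: lookup_add)
      qed
      show ?thesis unfolding IJ' KC1[OF fJ' j'J']
        using IJ' lookup_mult_single_zero wx by (metis KC1 fJ' j'J')
    qed
  qed simp
  have "Poly_Mapping.lookup (Phi n k b I) w = (\<Sum>J'\<in>Ks n k. Poly_Mapping.lookup (b J' * koszul_coeff J' I) w)"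
    by (simp add: Phi_def lookup_sum)
  also have "\<dots> = Poly_Mapping.lookup (b J * koszul_coeff J I) w"
    using other JK by (subst sum.remove[OF finite_Ks JK]) (auto intro!: sum.neutral)
  also have "\<dots> = Poly_Mapping.lookup (b J) u * sgnv J j0"
    unfolding I_def KC1[OF fJ j0J] w_def lookup_mult_single_shift ..
  also have "\<dots> \<noteq> 0" using u by (simp add: in_keys_iff)
  finally show False using z by simp
qed



lemma sgn_cancel:
  assumes fL: "finite L" and a: "a \<in> L" and b: "b \<in> L" and ab: "a < b"
  shows "sgnv L a * sgnv (L - {a}) b + sgnv L b * sgnv (L - {b}) a = (0::'a::field)"
proof -
  have e1: "{i\<in>L. i < b} = insert a {i\<in>L - {a}. i < b}" using a ab by auto
  have c1: "card {i\<in>L. i < b} = Suc (card {i\<in>L - {a}. i < b})"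
    unfolding e1 using fL by (subst card_insert_disjoint) auto
  have e2: "{i\<in>L - {b}. i < a} = {i\<in>L. i < a}" using ab by auto
  show ?thesis unfolding sgnv_def c1 e2 by simp
qed

lemma DD:
  fixes v :: "nat \<Rightarrow>\<^sub>0 nat" and c :: "'a::field"
  assumes fL: "finite L"
  shows "(\<Sum>l\<in>L. Poly_Mapping.single (v + var1 l) (c * sgnv L l) * koszul_coeff (L - {l}) I) = 0"
proof (cases "\<exists>a b. a \<in> L \<and> b \<in> L \<and> a < b \<and> I = L - {a, b}")
  case True
  then obtain a b where a: "a \<in> L" and b: "b \<in> L" and ab: "a < b" and I: "I = L - {a, b}" by blast
  let ?t = "\<lambda>l. Poly_Mapping.single (v + var1 l) (c * sgnv L l) * koszul_coeff (L - {l}) I"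
  have z: "?t l = 0" if "l \<in> L" "l \<notin> {a, b}" for l
  proof -
    have "\<not> (\<exists>m\<in>L - {l}. I = L - {l} - {m})" using that I by auto
    then show ?thesis using KC0[of "L - {l}" I] fL by (metis mult_zero_right finite_Diff)
  qed
  have "(\<Sum>l\<in>L. ?t l) = (\<Sum>l\<in>{a,b}. ?t l)"
    using a b z fL by (intro sum.mono_neutral_right) auto
  also have "\<dots> = ?t a + ?t b" using ab by simp
  also have "?t a = Poly_Mapping.single (v + var1 a + var1 b) (c * (sgnv L a * sgnv (L - {a}) b))"
  proof -
    have "I = (L - {a}) - {b}" using I by auto
    then have kc: "koszul_coeff (L - {a}) I = Poly_Mapping.single (var1 b) (sgnv (L - {a}) b)"
      using KC1[of "L - {a}" b] fL b ab by simp
    show ?thesis unfolding kc mult_single by (simp add: mult.assoc)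
  qed
  also have "?t b = Poly_Mapping.single (v + var1 a + var1 b) (c * (sgnv L b * sgnv (L - {b}) a))"
  proof -
    have "I = (L - {b}) - {a}" using I by auto
    then have kc: "koszul_coeff (L - {b}) I = Poly_Mapping.single (var1 a) (sgnv (L - {b}) a)"
      using KC1[of "L - {b}" a] fL a ab by simp
    show ?thesis unfolding kc mult_single by (simp add: mult.assoc add.commute add.left_commute)
  qed
  finally show ?thesis
    using sgn_cancel[OF fL a b ab, where 'a='a]
    by (simp add: single_add[symmetric] distrib_left[symmetric])
next
  case False
  have "koszul_coeff (L - {l}) I = 0" if "l \<in> L" for l
  proof (rule KC0)
    show "finite (L - {l})" using fL by simp
    show "\<not> (\<exists>m\<in>L - {l}. I = L - {l} - {m})"
    proof
      assume "\<exists>m\<in>L - {l}. I = L - {l} - {m}"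
      then obtain m where m: "m \<in> L" "m \<noteq> l" "I = L - {l, m}" by auto
      show False
      proof (cases "l < m")
        case True then show False using False m that by blast
      next
        case False
        then have "m < l" using m by simp
        then show False using \<open>\<not> (\<exists>a b. _)\<close> m that by (metis insert_commute)
      qed
    qed
  qed
  then show ?thesis by (metis (no_types, lifting) mult_zero_right sum.neutral)
qed



definition dl :: "nat set \<Rightarrow> 'a::field mpoly \<Rightarrow> nat set \<Rightarrow> 'a mpoly" where
  "dl J q = (\<lambda>J'. if J' = J then q else 0)"

definition GFa :: "nat \<Rightarrow> nat \<Rightarrow> (nat set \<Rightarrow> 'a::field mpoly) set" where
  "GFa n k = {b. (\<forall>J\<in>Ks n k. supp_in {Min J..<n} (b J)) \<and> (\<forall>J. J \<notin> Ks n k \<longrightarrow> b J = 0)}"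

definition Sp :: "nat \<Rightarrow> nat \<Rightarrow> (nat set \<Rightarrow> 'a::field mpoly) set" where
  "Sp n k = Phi n k ` GFa n k"

lemma GFa_0: "0 \<in> GFa n k" by (simp add: GFa_def)
lemma GFa_add: "a \<in> GFa n k \<Longrightarrow> b \<in> GFa n k \<Longrightarrow> a + b \<in> GFa n k"
  unfolding GFa_def by (simp add: supp_in_add)
lemma GFa_scale: "a \<in> GFa n k \<Longrightarrow> (\<lambda>J. mpConst c * a J) \<in> GFa n k"
  unfolding GFa_def by (simp add: supp_in_mpConst_mult)
lemma GFa_uminus: "a \<in> GFa n k \<Longrightarrow> - a \<in> GFa n k"
  unfolding GFa_def by (simp add: supp_in_uminus)
lemma GFa_diff: "a \<in> GFa n k \<Longrightarrow> b \<in> GFa n k \<Longrightarrow> a - b \<in> GFa n k"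
  unfolding GFa_def by (simp add: supp_in_diff)

lemma Sp_0: "0 \<in> Sp n k"
proof -
  have "Phi n k 0 \<in> Sp n k" unfolding Sp_def by (rule imageI) (rule GFa_0)
  then show ?thesis by (simp only: Phi_zero)
qed
lemma Sp_add: "x \<in> Sp n k \<Longrightarrow> y \<in> Sp n k \<Longrightarrow> x + y \<in> Sp n k"
proof -
  assume "x \<in> Sp n k" "y \<in> Sp n k"
  then obtain a b where "a \<in> GFa n k" "b \<in> GFa n k" "x = Phi n k a" "y = Phi n k b"
    unfolding Sp_def by blast
  then show ?thesis unfolding Sp_def using GFa_add Phi_add by (metis imageI)
qed
lemma Sp_uminus: "x \<in> Sp n k \<Longrightarrow> - x \<in> Sp n k"
proof -
  assume "x \<in> Sp n k"
  then obtain a where "a \<in> GFa n k" "x = Phi n k a"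
    unfolding Sp_def by blast
  then show ?thesis unfolding Sp_def using GFa_uminus Phi_uminus by (metis imageI)
qed
lemma Sp_sum: "(\<And>x. x \<in> S \<Longrightarrow> f x \<in> Sp n k) \<Longrightarrow> (\<Sum>x\<in>S. f x) \<in> Sp n k"
proof (induction S rule: infinite_finite_induct)
  case (infinite A) then show ?case using Sp_0 by (simp only: sum.infinite[OF infinite(1)])
next
  case empty then show ?case using Sp_0 by (simp only: sum.empty)
next
  case (insert x F)
  have "f x \<in> Sp n k" "sum f F \<in> Sp n k" using insert by auto
  then have "f x + sum f F \<in> Sp n k" by (rule Sp_add)
  then show ?case by (subst sum.insert[OF insert(1,2)])
qed

lemma Phi_dl: "J \<in> Ks n k \<Longrightarrow> Phi n k (dl J q) = (\<lambda>I. q * koszul_coeff J I)"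
proof -
  assume J: "J \<in> Ks n k"
  have "(\<Sum>J'\<in>Ks n k. dl J q J' * koszul_coeff J' I) = q * koszul_coeff J I" for I
  proof -
    have "(\<Sum>J'\<in>Ks n k. dl J q J' * koszul_coeff J' I) = (\<Sum>J'\<in>Ks n k. if J' = J then q * koszul_coeff J' I else 0)"
      by (intro sum.cong) (auto simp: dl_def)
    also have "\<dots> = q * koszul_coeff J I" using J by (simp add: sum.delta)
    finally show ?thesis .
  qed
  then show ?thesis by (auto simp: Phi_def)
qed

lemma dl_sum: "dl J (\<Sum>x\<in>S. f x) = (\<Sum>x\<in>S. dl J (f x))"
  by (rule ext) (simp add: sum_fun_apply dl_def)

lemma dl_in_GFa: "J \<in> Ks n k \<Longrightarrow> supp_in {Min J..<n} q \<Longrightarrow> dl J q \<in> GFa n k"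
  by (auto simp: GFa_def dl_def)

lemma step_span:
  assumes k: "1 \<le> k" and J: "J \<in> Ks n k" and u: "Poly_Mapping.keys u \<subseteq> {..<n}"
  shows "Phi n k (dl J (Poly_Mapping.single u c :: 'a::field mpoly)) \<in> Sp n k"
proof (cases "Poly_Mapping.keys u \<subseteq> {Min J..<n}")
  case True
  then show ?thesis unfolding Sp_def using dl_in_GFa[OF J supp_in_single[OF True]] by blast
next
  case False
  have fJ: "finite J" using J by (rule Ks_finite)
  have neJ: "J \<noteq> {}" using J k by (auto simp: Ks_def)
  have Jn: "J \<subseteq> {..<n}" and cJ: "card J = k" using J by (auto simp: Ks_def)
  obtain x where x0: "x \<in> Poly_Mapping.keys u" "x \<notin> {Min J..<n}" using False by blast
  then have x: "x \<in> Poly_Mapping.keys u" "x < Min J" using u by auto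
  define i where "i = Min (Poly_Mapping.keys u)"
  have iu: "i \<in> Poly_Mapping.keys u" unfolding i_def using x(1) by (intro Min_in finite_keys) blast
  have ile: "y \<in> Poly_Mapping.keys u \<Longrightarrow> i \<le> y" for y unfolding i_def by (rule Min_le[OF finite_keys])
  have iJ: "i < Min J" using ile[OF x(1)] x(2) by simp
  have iJ': "y \<in> J \<Longrightarrow> i < y" for y using iJ fJ by (meson Min_le less_le_trans)
  have inJ: "i \<notin> J" using iJ' by blast
  define L where "L = insert i J"
  have fL: "finite L" using fJ by (simp add: L_def)
  define u' where "u' = u - var1 i"
  have uu': "u = u' + var1 i"
    by (rule poly_mapping_eqI) (use iu in \<open>auto simp: u'_def lookup_add lookup_minus lookup_single when_def in_keys_iff\<close>)
  have ku': "Poly_Mapping.keys u' \<subseteq> Poly_Mapping.keys u"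
    by (auto simp: u'_def in_keys_iff lookup_minus)
  define t where "t = (\<lambda>l. dl (L - {l}) (Poly_Mapping.single (u' + var1 l) (c * sgnv L l)))"
  have LK: "L - {l} \<in> Ks n k" if "l \<in> J" for l
  proof -
    have "card (L - {l}) = k" using that fL inJ cJ fJ by (auto simp: L_def card_insert_if)
    moreover have "L - {l} \<subseteq> {..<n}" using Jn iu u by (auto simp: L_def)
    ultimately show ?thesis by (simp add: Ks_def)
  qed
  have LJ: "L - {i} = J" using inJ by (auto simp: L_def)
  have sgi: "sgnv L i = (1::'a)"
  proof -
    have "{y\<in>L. y < i} = {}" using iJ' by (auto simp: L_def dest: less_asym)
    then show ?thesis unfolding sgnv_def by (simp only: card.empty power_0)
  qed
  have dd: "(\<Sum>l\<in>L. Phi n k (t l)) = 0"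
  proof (rule ext)
    fix I
    have "(\<Sum>l\<in>L. Phi n k (t l)) I = (\<Sum>l\<in>L. Phi n k (t l) I)" by (simp add: sum_fun_apply)
    also have "\<dots> = (\<Sum>l\<in>L. Poly_Mapping.single (u' + var1 l) (c * sgnv L l) * koszul_coeff (L - {l}) I)"
    proof (intro sum.cong refl)
      fix l assume l: "l \<in> L"
      have "L - {l} \<in> Ks n k"
      proof (cases "l = i")
        case True then show ?thesis using LJ J by simp
      next
        case False then show ?thesis using l LK by (auto simp: L_def)
      qed
      then show "Phi n k (t l) I = Poly_Mapping.single (u' + var1 l) (c * sgnv L l) * koszul_coeff (L - {l}) I"
        by (simp add: t_def Phi_dl)
    qed
    also have "\<dots> = 0" by (rule DD[OF fL])
    finally show "(\<Sum>l\<in>L. Phi n k (t l)) I = 0 I" by simp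
  qed
  have ti: "t i = dl J (Poly_Mapping.single u c)"
    unfolding t_def LJ sgi uu'[symmetric] by simp
  have "(\<Sum>l\<in>L. Phi n k (t l)) = Phi n k (t i) + (\<Sum>l\<in>J. Phi n k (t l))"
    unfolding L_def using fJ inJ by simp
  then have eq: "Phi n k (dl J (Poly_Mapping.single u c)) = - (\<Sum>l\<in>J. Phi n k (t l))"
    using dd ti by (simp add: eq_neg_iff_add_eq_0)
  have "Phi n k (t l) \<in> Sp n k" if l: "l \<in> J" for l
  proof -
    have MinL: "Min (L - {l}) = i"
    proof (rule Min_eqI)
      show "finite (L - {l})" using fL by simp
      show "i \<in> L - {l}" using l inJ by (auto simp: L_def)
      fix y assume "y \<in> L - {l}" then show "i \<le> y" using iJ' by (auto simp: L_def less_imp_le)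
    qed
    have "supp_in {i..<n} (Poly_Mapping.single (u' + var1 l) (c * sgnv L l))"
    proof (rule supp_in_single)
      have "Poly_Mapping.keys (u' + var1 l) \<subseteq> Poly_Mapping.keys u' \<union> {l}"
        using keys_add[of u' "var1 l"] by auto
      also have "\<dots> \<subseteq> {i..<n}"
      proof
        fix y assume "y \<in> Poly_Mapping.keys u' \<union> {l}"
        then show "y \<in> {i..<n}"
        proof
          assume "y \<in> Poly_Mapping.keys u'"
          then have "y \<in> Poly_Mapping.keys u" using ku' by blast
          then show ?thesis using ile u by auto
        next
          assume "y \<in> {l}"
          then show ?thesis using iJ'[OF l] l Jn by auto
        qed
      qed
      finally show "Poly_Mapping.keys (u' + var1 l) \<subseteq> {i..<n}" .
    qed
    then have "t l \<in> GFa n k" unfolding t_def using dl_in_GFa[OF LK[OF l]] MinL by simp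
    then show ?thesis by (simp add: Sp_def)
  qed
  then show ?thesis unfolding eq by (intro Sp_uminus Sp_sum)
qed

lemma span_all:
  assumes k: "1 \<le> k" and a: "\<forall>J. in_R n (a J)"
  shows "Phi n k (a :: nat set \<Rightarrow> 'a::field mpoly) \<in> Sp n k"
proof -
  have "Phi n k a = Phi n k (\<Sum>J\<in>Ks n k. dl J (a J))"
  proof (rule Phi_cong)
    fix J0 assume J0: "J0 \<in> Ks n k"
    have "(\<Sum>J\<in>Ks n k. dl J (a J)) J0 = (\<Sum>J\<in>Ks n k. if J0 = J then a J else 0)"
      by (simp add: sum_fun_apply dl_def)
    also have "\<dots> = a J0" using J0 by (simp add: sum.delta)
    finally show "a J0 = (\<Sum>J\<in>Ks n k. dl J (a J)) J0" by simp
  qed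
  also have "\<dots> = (\<Sum>J\<in>Ks n k. Phi n k (dl J (a J)))" by (rule Phi_sum)
  also have "\<dots> \<in> Sp n k"
  proof (rule Sp_sum)
    fix J assume J: "J \<in> Ks n k"
    have "dl J (a J) = (\<Sum>m\<in>Poly_Mapping.keys (a J). dl J (Poly_Mapping.single m (Poly_Mapping.lookup (a J) m)))"
      by (subst poly_expand[of "a J"]) (simp add: dl_sum)
    then have "Phi n k (dl J (a J)) = (\<Sum>m\<in>Poly_Mapping.keys (a J). Phi n k (dl J (Poly_Mapping.single m (Poly_Mapping.lookup (a J) m))))"
      by (simp add: Phi_sum)
    also have "\<dots> \<in> Sp n k"
    proof (rule Sp_sum)
      fix m assume "m \<in> Poly_Mapping.keys (a J)"
      then have "Poly_Mapping.keys m \<subseteq> {..<n}" using a by (auto simp: in_R_def)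
      then show "Phi n k (dl J (Poly_Mapping.single m (Poly_Mapping.lookup (a J) m))) \<in> Sp n k"
        by (rule step_span[OF k J])
    qed
    finally show "Phi n k (dl J (a J)) \<in> Sp n k" .
  qed
  finally show ?thesis .
qed

lemma koszul_cases: "finite J \<Longrightarrow> koszul_coeff J I = 0 \<or> (\<exists>j s. koszul_coeff J I = Poly_Mapping.single (var1 j) s)"
  by (metis KC0 KC1)

lemma hc_koszul:
  fixes p :: "'a::field mpoly"
  assumes fJ: "finite J"
  shows "hc (e + 1) (p * koszul_coeff J I) = hc e p * koszul_coeff J I"
proof (cases "koszul_coeff J I = (0::'a mpoly)")
  case True then show ?thesis unfolding True by simp
next
  case False
  then obtain j and s :: 'a where 2: "koszul_coeff J I = Poly_Mapping.single (var1 j) s"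
    using koszul_cases[OF fJ] by blast
  have "hc (e + int (mon_deg (var1 j))) (p * Poly_Mapping.single (var1 j) s) = hc e p * Poly_Mapping.single (var1 j) s"
    by (rule hc_mult_single)
  then show ?thesis unfolding 2 using mon_deg_single[of j] by simp
qed

lemma span_homog:
  assumes k: "1 \<le> k" and a: "\<forall>J. in_R n (a J)"
    and h: "\<forall>I. homog (e + 1) (Phi n k a I)"
  shows "\<exists>b\<in>GFa n k. (\<forall>J. homog e (b J)) \<and> Phi n k b = Phi n k (a :: nat set \<Rightarrow> 'a::field mpoly)"
proof -
  obtain b0 where b0: "b0 \<in> GFa n k" and eq: "Phi n k b0 = Phi n k a"
    using span_all[OF k a] unfolding Sp_def by auto
  define b where "b = (\<lambda>J. hc e (b0 J))"
  have "b \<in> GFa n k" using b0 by (auto simp: GFa_def b_def supp_in_hc)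
  moreover have "\<forall>J. homog e (b J)" by (simp add: b_def homog_hc)
  moreover have "Phi n k b = Phi n k a"
  proof (rule ext)
    fix I
    have "Phi n k b I = (\<Sum>J\<in>Ks n k. hc (e+1) (b0 J * koszul_coeff J I))"
      unfolding Phi_def b_def by (intro sum.cong refl) (simp add: hc_koszul Ks_finite)
    also have "\<dots> = hc (e+1) (Phi n k b0 I)" by (simp add: Phi_def hc_sum)
    also have "\<dots> = Phi n k a I" unfolding eq using h hc_id by blast
    finally show "Phi n k b I = Phi n k a I" .
  qed
  ultimately show ?thesis by blast
qed



lemma ag_good: "p \<in> alg_gen (mpVar ` A) \<Longrightarrow> supp_in A (p :: 'a::field mpoly)"
  by (induction rule: alg_gen.induct) (auto intro: supp_in_mpConst supp_in_mpVar supp_in_add supp_in_mult)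

lemma ag_0: "0 \<in> alg_gen G"
  using alg_gen.const[of 0 G] by simp
lemma ag_1: "1 \<in> alg_gen G"
  using alg_gen.const[of 1 G] by simp
lemma ag_sum: "(\<And>x. x \<in> S \<Longrightarrow> f x \<in> alg_gen G) \<Longrightarrow> (\<Sum>x\<in>S. f x) \<in> alg_gen G"
  by (induction S rule: infinite_finite_induct) (auto intro: ag_0 alg_gen.add)
lemma ag_prod: "(\<And>x. x \<in> S \<Longrightarrow> f x \<in> alg_gen G) \<Longrightarrow> (\<Prod>x\<in>S. f x) \<in> alg_gen G"
  by (induction S rule: infinite_finite_induct) (auto intro: ag_1 alg_gen.mult)
lemma ag_pow: "p \<in> alg_gen G \<Longrightarrow> p ^ m \<in> alg_gen G"
  by (induction m) (auto intro: ag_1 alg_gen.mult)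

lemma single_pow: "Poly_Mapping.single (Poly_Mapping.single x c) (1::'a::field) = mpVar x ^ c"
proof (induction c)
  case 0 then show ?case by simp
next
  case (Suc c)
  have "mpVar x ^ Suc c = mpVar x * (mpVar x ^ c :: 'a mpoly)" by simp
  also have "\<dots> = Poly_Mapping.single (Poly_Mapping.single x 1) 1 * Poly_Mapping.single (Poly_Mapping.single x c) 1"
    using Suc by (simp add: mpVar_def)
  also have "\<dots> = Poly_Mapping.single (Poly_Mapping.single x 1 + Poly_Mapping.single x c) 1"
    by (simp add: mult_single)
  also have "\<dots> = Poly_Mapping.single (Poly_Mapping.single x (Suc c)) 1"
    by (simp add: single_add[symmetric])
  finally show ?case by simp
qed

lemma mono_prod:
  fixes S :: "nat set"
  assumes "finite S"
  shows "Poly_Mapping.keys m \<subseteq> S \<Longrightarrow> Poly_Mapping.single m (1::'a::field) = (\<Prod>i\<in>S. mpVar i ^ Poly_Mapping.lookup m i)"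
  using assms
proof (induction S arbitrary: m rule: finite_induct)
  case empty
  then have "m = 0" by simp
  then show ?case by simp
next
  case (insert x S)
  define m' where "m' = m - Poly_Mapping.single x (Poly_Mapping.lookup m x)"
  have lm': "Poly_Mapping.lookup m' i = (if i = x then 0 else Poly_Mapping.lookup m i)" for i
    by (simp add: m'_def lookup_minus lookup_single when_def)
  have km': "Poly_Mapping.keys m' \<subseteq> S"
  proof
    fix i assume "i \<in> Poly_Mapping.keys m'"
    then have "i \<noteq> x" "i \<in> Poly_Mapping.keys m" by (auto simp: in_keys_iff lm' split: if_splits)
    then show "i \<in> S" using insert.prems by auto
  qed
  have mm: "m = m' + Poly_Mapping.single x (Poly_Mapping.lookup m x)"
    by (rule poly_mapping_eqI) (simp add: lookup_add lm' lookup_single when_def)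
  have "Poly_Mapping.single m (1::'a) = Poly_Mapping.single m' 1 * Poly_Mapping.single (Poly_Mapping.single x (Poly_Mapping.lookup m x)) 1"
    by (subst mm) (simp add: mult_single)
  also have "\<dots> = (\<Prod>i\<in>S. mpVar i ^ Poly_Mapping.lookup m' i) * mpVar x ^ Poly_Mapping.lookup m x"
    using insert.IH[OF km'] by (simp add: single_pow)
  also have "(\<Prod>i\<in>S. mpVar i ^ Poly_Mapping.lookup m' i) = (\<Prod>i\<in>S. mpVar i ^ Poly_Mapping.lookup m i)"
    using insert.hyps by (intro prod.cong refl) (auto simp: lm')
  finally show ?case using insert.hyps by (simp add: mult.commute)
qed

lemma good_ag:
  assumes "supp_in A (p :: 'a::field mpoly)"
  shows "p \<in> alg_gen (mpVar ` A)"
proof -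
  have "p = (\<Sum>m\<in>Poly_Mapping.keys p. Poly_Mapping.single m (Poly_Mapping.lookup p m))" by (rule poly_expand)
  also have "\<dots> \<in> alg_gen (mpVar ` A)"
  proof (rule ag_sum)
    fix m assume m: "m \<in> Poly_Mapping.keys p"
    have km: "Poly_Mapping.keys m \<subseteq> A" using assms m by (auto simp: supp_in_def)
    have "Poly_Mapping.single m (Poly_Mapping.lookup p m) = mpConst (Poly_Mapping.lookup p m) * Poly_Mapping.single m 1"
      by (simp add: mpConst_single)
    also have "\<dots> = mpConst (Poly_Mapping.lookup p m) * (\<Prod>i\<in>Poly_Mapping.keys m. mpVar i ^ Poly_Mapping.lookup m i)"
      using mono_prod[OF finite_keys, of m m, where 'a='a] by simp
    also have "\<dots> \<in> alg_gen (mpVar ` A)"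
      using km by (intro alg_gen.mult alg_gen.const ag_prod ag_pow alg_gen.gen) auto
    finally show "Poly_Mapping.single m (Poly_Mapping.lookup p m) \<in> alg_gen (mpVar ` A)" .
  qed
  finally show ?thesis .
qed

lemma piece_ag: "piece (alg_gen (mpVar ` A)) e = {p :: 'a::field mpoly. supp_in A p \<and> homog e p}"
  by (auto simp: piece_def intro: good_ag ag_good)

lemma gr_ag: "A \<subseteq> {..<n} \<Longrightarrow> graded_retract n (alg_gen (mpVar ` A) :: 'a::field mpoly set)"
  unfolding graded_retract_def linear_forms_def
  by (rule exI[of _ "mpVar ` A"]) (auto simp: in_R_supp intro: supp_in_mpVar homog_mpVar)



definition GF :: "nat \<Rightarrow> nat \<Rightarrow> int \<Rightarrow> (nat set \<Rightarrow> 'a::field mpoly) set" where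
  "GF n k e = {b\<in>GFa n k. \<forall>J. homog e (b J)}"

lemma GFa_in_R: "b \<in> GFa n k \<Longrightarrow> in_R n (b J)"
  unfolding GFa_def in_R_supp by (cases "J \<in> Ks n k") (auto intro: supp_in_mono)

lemma koszul_homog: "finite J \<Longrightarrow> homog 1 (koszul_coeff J I :: 'a::field mpoly)"
proof (cases "koszul_coeff J I = (0::'a mpoly)")
  case True then show ?thesis by simp
next
  case False
  assume fJ: "finite J"
  then obtain j and s :: 'a where 2: "koszul_coeff J I = Poly_Mapping.single (var1 j) s"
    using koszul_cases[OF fJ] False by blast
  show ?thesis unfolding 2 by (rule homog_single) (use mon_deg_single[of j] in simp)
qed

lemma Phi_homog: "\<forall>J. homog e (b J) \<Longrightarrow> homog (e + 1) (Phi n k (b :: nat set \<Rightarrow> 'a::field mpoly) I)"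
  unfolding Phi_def by (intro homog_sum homog_mult koszul_homog) (auto intro: Ks_finite)

lemma syz_piece_char:
  assumes k: "1 \<le> k"
  shows "v \<in> syz_piece n k d \<longleftrightarrow> (\<exists>b\<in>GF n k (d - int k). Phi n k b = (v :: nat set \<Rightarrow> 'a::field mpoly))"
proof
  assume v: "v \<in> syz_piece n k d"
  then obtain a where a: "\<forall>J. in_R n (a J)" and va: "v = Phi n k a"
    by (auto simp: syz_piece_def syz_eq)
  have "\<forall>I. homog ((d - int k) + 1) (Phi n k a I)" using v va by (simp add: syz_piece_def algebra_simps)
  then obtain b where "b \<in> GFa n k" "\<forall>J. homog (d - int k) (b J)" "Phi n k b = Phi n k a"
    using span_homog[OF k a] by blast
  then show "\<exists>b\<in>GF n k (d - int k). Phi n k b = v" using va by (auto simp: GF_def)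
next
  assume "\<exists>b\<in>GF n k (d - int k). Phi n k b = v"
  then obtain b where b: "b \<in> GF n k (d - int k)" and vb: "Phi n k b = v" by blast
  have bR: "\<forall>J. in_R n (b J)" using b GFa_in_R by (auto simp: GF_def)
  have "v \<in> syz n k" unfolding syz_eq using vb bR by blast
  moreover have "homog (d - (int k - 1)) (v I)" for I
    using Phi_homog[of "d - int k" b n k I] b vb by (auto simp: GF_def algebra_simps)
  ultimately show "v \<in> syz_piece n k d" by (simp add: syz_piece_def)
qed

lemma GFa_uniq:
  assumes k: "1 \<le> k" and b: "b \<in> GFa n k" and b': "b' \<in> GFa n k" and eq: "Phi n k b = Phi n k (b' :: nat set \<Rightarrow> 'a::field mpoly)"
  shows "b = b'"
proof -
  have bb: "b - b' \<in> GFa n k" using b b' by (rule GFa_diff)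
  have "Phi n k (b - b') = 0" using eq by (simp add: Phi_diff)
  then have z: "\<forall>J\<in>Ks n k. (b - b') J = 0" using IND[OF k, of n "b - b'"] bb unfolding GFa_def by blast
  have o: "\<forall>J. J \<notin> Ks n k \<longrightarrow> b J = 0 \<and> b' J = 0" using b b' unfolding GFa_def by blast
  show ?thesis
  proof
    fix J show "b J = b' J"
      using z o by (cases "J \<in> Ks n k") auto
  qed
qed

definition Js :: "nat \<Rightarrow> nat \<Rightarrow> nat set list" where
  "Js n k = (SOME xs. distinct xs \<and> set xs = Ks n k)"

lemma Js: "distinct (Js n k) \<and> set (Js n k) = Ks n k"
  unfolding Js_def by (rule someI_ex) (metis finite_distinct_list finite_Ks)

definition D0 :: "nat \<Rightarrow> nat \<Rightarrow> ('a::field mpoly set \<times> int) list" where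
  "D0 n k = map (\<lambda>J. (alg_gen (mpVar ` {Min J..<n}), int k)) (Js n k)"

definition sol :: "nat \<Rightarrow> nat \<Rightarrow> int \<Rightarrow> (nat set \<Rightarrow> 'a::field mpoly) \<Rightarrow> (nat set \<Rightarrow> 'a mpoly)" where
  "sol n k d v = (THE b. b \<in> GF n k (d - int k) \<and> Phi n k b = v)"

definition f0 :: "nat \<Rightarrow> nat \<Rightarrow> int \<Rightarrow> (nat set \<Rightarrow> 'a::field mpoly) \<Rightarrow> (nat \<Rightarrow> 'a mpoly)" where
  "f0 n k d v = (\<lambda>i. if i < length (Js n k) then sol n k d v (Js n k ! i) else 0)"

lemma sol_eq:
  assumes k: "1 \<le> k" and b: "b \<in> GF n k (d - int k)"
  shows "sol n k d (Phi n k b) = (b :: nat set \<Rightarrow> 'a::field mpoly)"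
  unfolding sol_def
proof (rule the_equality)
  show "b \<in> GF n k (d - int k) \<and> Phi n k b = Phi n k b" using b by simp
  fix b' assume "b' \<in> GF n k (d - int k) \<and> Phi n k b' = Phi n k b"
  then show "b' = b" using GFa_uniq[OF k, of b' n b] b by (auto simp: GF_def)
qed

lemma sol_prop:
  assumes k: "1 \<le> k" and v: "v \<in> syz_piece n k d"
  shows "sol n k d v \<in> GF n k (d - int k) \<and> Phi n k (sol n k d v) = (v :: nat set \<Rightarrow> 'a::field mpoly)"
proof -
  obtain b where b: "b \<in> GF n k (d - int k)" "Phi n k b = v" using v syz_piece_char[OF k] by blast
  then show ?thesis using sol_eq[OF k b(1)] by simp
qed

lemma GF_add: "a \<in> GF n k e \<Longrightarrow> b \<in> GF n k e \<Longrightarrow> a + b \<in> GF n k e"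
  unfolding GF_def using GFa_add by (auto intro: homog_add)
lemma GF_scale: "a \<in> GF n k e \<Longrightarrow> (\<lambda>J. mpConst c * a J) \<in> GF n k e"
  unfolding GF_def using GFa_scale by (auto intro: homog_mpConst_mult)

lemma exists_decomp:
  assumes k: "1 \<le> k"
  shows "hilbert_decomp n k (D0 n k :: ('a::field mpoly set \<times> int) list)"
  unfolding hilbert_decomp_def
proof (intro conjI allI impI)
  fix i assume "i < length (D0 n k :: ('a mpoly set \<times> int) list)"
  then show "graded_retract n (fst ((D0 n k :: ('a mpoly set \<times> int) list) ! i))"
    by (auto simp: D0_def intro!: gr_ag)
next
  fix d :: int
  let ?xs = "Js n k"
  let ?D = "D0 n k :: ('a mpoly set \<times> int) list"
  let ?S = "syz_piece n k d :: (nat set \<Rightarrow> 'a mpoly) set"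
  let ?f = "f0 n k d :: (nat set \<Rightarrow> 'a mpoly) \<Rightarrow> _"
  have dist: "distinct ?xs" and setxs: "set ?xs = Ks n k" using Js by auto
  have dsum: "dsum_piece ?D d = {g. (\<forall>i<length ?xs. supp_in {Min (?xs ! i)..<n} (g i) \<and> homog (d - int k) (g i)) \<and> (\<forall>i\<ge>length ?xs. g i = 0)}"
    unfolding dsum_piece_def D0_def by (simp add: piece_ag)
  have xsK: "i < length ?xs \<Longrightarrow> ?xs ! i \<in> Ks n k" for i using setxs nth_mem by blast
  have sol_add: "sol n k d (x + y) = sol n k d x + sol n k d y"
    if x: "x \<in> ?S" and y: "y \<in> ?S" for x y :: "nat set \<Rightarrow> 'a mpoly"
  proof -
    have "x + y = Phi n k (sol n k d x + sol n k d y)"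
      using sol_prop[OF k x] sol_prop[OF k y] by (simp add: Phi_add)
    moreover have "sol n k d x + sol n k d y \<in> GF n k (d - int k)"
      using sol_prop[OF k x] sol_prop[OF k y] by (intro GF_add) auto
    ultimately show ?thesis using sol_eq[OF k] by simp
  qed
  have sol_scale: "sol n k d (\<lambda>I. mpConst c * x I) = (\<lambda>J. mpConst c * sol n k d x J)"
    if x: "x \<in> ?S" for x :: "nat set \<Rightarrow> 'a mpoly" and c
  proof -
    have "(\<lambda>I. mpConst c * x I) = Phi n k (\<lambda>J. mpConst c * sol n k d x J)"
      using sol_prop[OF k x] by (simp add: Phi_scale)
    moreover have "(\<lambda>J. mpConst c * sol n k d x J) \<in> GF n k (d - int k)"
      using sol_prop[OF k x] by (intro GF_scale) auto
    ultimately show ?thesis using sol_eq[OF k] by simp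
  qed
  have bij: "bij_betw ?f (?S) (dsum_piece ?D d)"
  proof (rule bij_betw_imageI)
    show "inj_on ?f (?S)"
    proof (rule inj_onI)
      fix x y assume x: "x \<in> ?S" and y: "y \<in> ?S" and eq: "?f x = ?f y"
      have "sol n k d x = sol n k d y"
      proof
        fix J show "sol n k d x J = sol n k d y J"
        proof (cases "J \<in> Ks n k")
          case True
          then have "J \<in> set ?xs" using setxs by simp
          then obtain i where i: "i < length ?xs" "?xs ! i = J" by (auto simp: in_set_conv_nth)
          have "?f x i = ?f y i" using eq by simp
          then show ?thesis using i by (simp add: f0_def)
        next
          case False
          then show ?thesis using sol_prop[OF k x] sol_prop[OF k y] by (auto simp: GF_def GFa_def)
        qed
      qed
      moreover have "x = Phi n k (sol n k d x)" "y = Phi n k (sol n k d y)"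
        using sol_prop[OF k x] sol_prop[OF k y] by auto
      ultimately show "x = y" by simp
    qed
  next
    show "?f ` ?S = dsum_piece ?D d"
    proof
      show "?f ` ?S \<subseteq> dsum_piece ?D d"
      proof
        fix g assume "g \<in> ?f ` ?S"
        then obtain x where x: "x \<in> ?S" and g: "g = ?f x" by blast
        have sx: "sol n k d x \<in> GF n k (d - int k)" using sol_prop[OF k x] by blast
        show "g \<in> dsum_piece ?D d" unfolding dsum g
        proof (intro CollectI conjI allI impI)
          fix i assume i: "i < length ?xs"
          have "?xs ! i \<in> Ks n k" by (rule xsK[OF i])
          then have "supp_in {Min (?xs ! i)..<n} (sol n k d x (?xs ! i))" "homog (d - int k) (sol n k d x (?xs ! i))"
            using sx unfolding GF_def GFa_def by blast+
          then show "supp_in {Min (?xs ! i)..<n} (?f x i)" "homog (d - int k) (?f x i)"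
            using i unfolding f0_def by simp_all
        next
          fix i assume "length ?xs \<le> i" then show "?f x i = 0" unfolding f0_def by simp
        qed
      qed
    next
      show "dsum_piece ?D d \<subseteq> ?f ` ?S"
      proof
        fix g assume g: "g \<in> dsum_piece ?D d"
        define idx where "idx J = (THE i. i < length ?xs \<and> ?xs ! i = J)" for J
        have idx: "idx (?xs ! i) = i" if "i < length ?xs" for i
          unfolding idx_def
        proof (rule the_equality)
          show "i < length ?xs \<and> ?xs ! i = ?xs ! i" using that by simp
          fix i' assume "i' < length ?xs \<and> ?xs ! i' = ?xs ! i"
          then show "i' = i" using nth_eq_iff_index_eq[OF dist] that by blast
        qed
        have idx2: "idx J < length ?xs \<and> ?xs ! idx J = J" if "J \<in> Ks n k" for J
        proof -
          have "J \<in> set ?xs" using that setxs by simp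
          then obtain i where i: "i < length ?xs" "?xs ! i = J" by (auto simp: in_set_conv_nth)
          then show ?thesis using idx[OF i(1)] by simp
        qed
        define b where "b J = (if J \<in> Ks n k then g (idx J) else 0)" for J
        have gi: "supp_in {Min (?xs ! i)..<n} (g i) \<and> homog (d - int k) (g i)" if "i < length ?xs" for i
          using g that unfolding dsum by blast
        have bGF: "b \<in> GF n k (d - int k)"
          unfolding GF_def GFa_def
        proof (intro CollectI conjI ballI allI impI)
          fix J assume J: "J \<in> Ks n k"
          show "supp_in {Min J..<n} (b J)" using gi[of "idx J"] idx2[OF J] J by (simp add: b_def)
        next
          fix J assume "J \<notin> Ks n k" then show "b J = 0" by (simp add: b_def)
        next
          fix J show "homog (d - int k) (b J)" using gi[of "idx J"] idx2[of J] by (auto simp: b_def)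
        qed
        define v where "v = Phi n k b"
        have v: "v \<in> ?S" using syz_piece_char[OF k] bGF v_def by blast
        have "?f v = g"
        proof
          fix i show "?f v i = g i"
          proof (cases "i < length ?xs")
            case True
            then show ?thesis using sol_eq[OF k bGF] xsK[OF True] idx[OF True]
              by (simp add: f0_def v_def b_def)
          next
            case False then show ?thesis using g unfolding dsum by (simp add: f0_def)
          qed
        qed
        then show "g \<in> ?f ` ?S" using v by blast
      qed
    qed
  qed
  show "\<exists>f. bij_betw f (?S) (dsum_piece ?D d) \<and>
         (\<forall>x\<in>?S. \<forall>y\<in>?S. f (\<lambda>I. x I + y I) = (\<lambda>i. f x i + f y i)) \<and>
         (\<forall>c. \<forall>x\<in>?S. f (\<lambda>I. mpConst c * x I) = (\<lambda>i. mpConst c * f x i))"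
  proof (intro exI conjI ballI allI)
    show "bij_betw ?f (?S) (dsum_piece ?D d)" by (rule bij)
  next
    fix x y assume x: "x \<in> ?S" and y: "y \<in> ?S"
    have e: "(\<lambda>I. x I + y I) = x + y" by (simp add: plus_fun_def)
    show "?f (\<lambda>I. x I + y I) = (\<lambda>i. ?f x i + ?f y i)"
      unfolding e using sol_add[OF x y] by (auto simp: f0_def fun_eq_iff)
  next
    fix c and x assume x: "x \<in> ?S"
    show "?f (\<lambda>I. mpConst c * x I) = (\<lambda>i. mpConst c * ?f x i)"
      using sol_scale[OF x] by (auto simp: f0_def fun_eq_iff)
  qed
qed



interpretation VP: vector_space "\<lambda>c (p::'a::field mpoly). mpConst c * p"
  by (rule vs_mpoly)

interpretation VF: vector_space "\<lambda>c (v::'b \<Rightarrow> 'a::field mpoly) i. mpConst c * v i"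
  using vs_fun[where 'b='b and 'a='a] by simp

lemma retract_dim_VP: "retract_dim S = VP.dim (piece S 1)"
  by (simp add: retract_dim_def)

lemma zero_fun_lam: "(\<lambda>x. 0) = 0"
  by (simp add: zero_fun_def)

lemma lin_sum:
  fixes f :: "('b \<Rightarrow> 'a::field mpoly) \<Rightarrow> ('c \<Rightarrow> 'a mpoly)"
  assumes V0: "0 \<in> V" and Vadd: "\<And>x y. x \<in> V \<Longrightarrow> y \<in> V \<Longrightarrow> x + y \<in> V"
    and Vsc: "\<And>c x. x \<in> V \<Longrightarrow> (\<lambda>I. mpConst c * x I) \<in> V"
    and fadd: "\<forall>x\<in>V. \<forall>y\<in>V. f (\<lambda>I. x I + y I) = (\<lambda>i. f x i + f y i)"
    and fsc: "\<forall>c. \<forall>x\<in>V. f (\<lambda>I. mpConst c * x I) = (\<lambda>i. mpConst c * f x i)"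
    and T: "finite T" "T \<subseteq> V"
  shows "(\<Sum>x\<in>T. (\<lambda>I. mpConst (u x) * x I)) \<in> V \<and>
         f (\<Sum>x\<in>T. (\<lambda>I. mpConst (u x) * x I)) = (\<Sum>x\<in>T. (\<lambda>i. mpConst (u x) * f x i))"
  using T
proof (induction T rule: finite_induct)
  case empty
  have "f (\<lambda>I. 0 I + 0 I) = (\<lambda>i. f 0 i + f 0 i)" using fadd V0 by blast
  moreover have "(\<lambda>I. (0::'b \<Rightarrow> 'a mpoly) I + 0 I) = 0" by (rule ext) simp
  ultimately have e: "f 0 = (\<lambda>i. f 0 i + f 0 i)" by simp
  have "f 0 i = 0" for i
  proof -
    have "f 0 i = f 0 i + f 0 i" using fun_cong[OF e, of i] by simp
    then show ?thesis by (metis add_cancel_right_right)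
  qed
  then have "f 0 = 0" by (simp add: fun_eq_iff)
  then show ?case using V0 by (simp add: zero_fun_lam)
next
  case (insert x F)
  let ?s = "\<Sum>x\<in>F. (\<lambda>I. mpConst (u x) * x I)"
  have xV: "x \<in> V" and FV: "F \<subseteq> V" using insert.prems by auto
  have IH: "?s \<in> V" "f ?s = (\<Sum>x\<in>F. (\<lambda>i. mpConst (u x) * f x i))" using insert.IH[OF FV] by auto
  have sx: "(\<lambda>I. mpConst (u x) * x I) \<in> V" using Vsc[OF xV] .
  have e: "(\<Sum>x\<in>insert x F. (\<lambda>I. mpConst (u x) * x I)) = (\<lambda>I. (\<lambda>I. mpConst (u x) * x I) I + ?s I)"
    using insert.hyps by (simp add: plus_fun_def)
  show ?case
  proof
    show "(\<Sum>x\<in>insert x F. (\<lambda>I. mpConst (u x) * x I)) \<in> V"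
      unfolding e using Vadd[OF sx IH(1)] by (simp add: plus_fun_def)
    have "f (\<Sum>x\<in>insert x F. (\<lambda>I. mpConst (u x) * x I)) = (\<lambda>i. f (\<lambda>I. mpConst (u x) * x I) i + f ?s i)"
      unfolding e by (rule fadd[rule_format, OF sx IH(1)])
    also have "\<dots> = (\<lambda>i. mpConst (u x) * f x i + f ?s i)"
      using fsc xV by simp
    also have "\<dots> = (\<Sum>x\<in>insert x F. (\<lambda>i. mpConst (u x) * f x i))"
      using insert.hyps IH(2) by (simp add: plus_fun_def)
    finally show "f (\<Sum>x\<in>insert x F. (\<lambda>I. mpConst (u x) * x I)) = (\<Sum>x\<in>insert x F. (\<lambda>i. mpConst (u x) * f x i))" .
  qed
qed

lemma transfer_indep:
  fixes f :: "('b \<Rightarrow> 'a::field mpoly) \<Rightarrow> ('c \<Rightarrow> 'a mpoly)"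
  assumes V0: "0 \<in> V" and Vadd: "\<And>x y. x \<in> V \<Longrightarrow> y \<in> V \<Longrightarrow> x + y \<in> V"
    and Vsc: "\<And>c x. x \<in> V \<Longrightarrow> (\<lambda>I. mpConst c * x I) \<in> V"
    and fadd: "\<forall>x\<in>V. \<forall>y\<in>V. f (\<lambda>I. x I + y I) = (\<lambda>i. f x i + f y i)"
    and fsc: "\<forall>c. \<forall>x\<in>V. f (\<lambda>I. mpConst c * x I) = (\<lambda>i. mpConst c * f x i)"
    and inj: "inj_on f V" and AV: "A \<subseteq> V" and ind: "VF.independent A"
  shows "VF.independent (f ` A)"
  unfolding VF.independent_explicit_finite_subsets
proof (intro allI impI ballI)
  fix S u w assume S: "S \<subseteq> f ` A" and fS: "finite S" and sum0: "(\<Sum>v\<in>S. (\<lambda>i. mpConst (u v) * v i)) = 0" and w: "w \<in> S"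
  define S' where "S' = {x\<in>A. f x \<in> S}"
  have injS': "inj_on f S'" using inj AV by (auto simp: S'_def intro: inj_on_subset)
  have SS': "S = f ` S'" using S by (auto simp: S'_def)
  have fS': "finite S'" using fS SS' injS' finite_image_iff by blast
  have S'V: "S' \<subseteq> V" using AV by (auto simp: S'_def)
  let ?u = "\<lambda>x. u (f x)"
  have ls: "(\<Sum>x\<in>S'. (\<lambda>I. mpConst (?u x) * x I)) \<in> V \<and>
         f (\<Sum>x\<in>S'. (\<lambda>I. mpConst (?u x) * x I)) = (\<Sum>x\<in>S'. (\<lambda>i. mpConst (?u x) * f x i))"
    by (rule lin_sum[OF V0 Vadd Vsc fadd fsc fS' S'V])
  have "(\<Sum>x\<in>S'. (\<lambda>i. mpConst (?u x) * f x i)) = (\<Sum>v\<in>S. (\<lambda>i. mpConst (u v) * v i))"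
    unfolding SS' by (subst sum.reindex[OF injS']) simp
  then have f1: "f (\<Sum>x\<in>S'. (\<lambda>I. mpConst (?u x) * x I)) = 0"
    using ls sum0 by simp
  have f0: "f 0 = 0" using conjunct2[OF lin_sum[OF V0 Vadd Vsc fadd fsc finite.emptyI empty_subsetI]] by (simp only: sum.empty)
  have z: "(\<Sum>x\<in>S'. (\<lambda>I. mpConst (?u x) * x I)) = 0"
    by (rule inj_onD[OF inj]) (use ls V0 f0 f1 in auto)
  have S'A: "S' \<subseteq> A" unfolding S'_def by blast
  have ii: "\<And>S u. S \<subseteq> A \<Longrightarrow> finite S \<Longrightarrow> (\<Sum>v\<in>S. (\<lambda>i. mpConst (u v) * v i)) = 0 \<Longrightarrow> \<forall>v\<in>S. u v = 0"
    using ind unfolding VF.independent_explicit_finite_subsets by blast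
  have all: "\<forall>x\<in>S'. ?u x = 0" by (rule ii[OF S'A fS' z])
  obtain x where "x \<in> S'" "w = f x" using w SS' by blast
  then show "u w = 0" using all by simp
qed




lemma GF_0: "0 \<in> GF n k e" by (simp add: GF_def GFa_0)

lemma syzp_0: "1 \<le> k \<Longrightarrow> (0 :: nat set \<Rightarrow> 'a::field mpoly) \<in> syz_piece n k d"
proof -
  assume k: "1 \<le> k"
  have "Phi n k (0 :: nat set \<Rightarrow> 'a mpoly) \<in> syz_piece n k d" using syz_piece_char[OF k] GF_0 by blast
  then show ?thesis by simp
qed

lemma var1_inj: "var1 i = var1 j \<longleftrightarrow> i = j"
  by (metis lookup_single_eq lookup_single_not_eq zero_neq_one)
lemma var1_inj': "Poly_Mapping.single (i::nat) (Suc 0) = Poly_Mapping.single j (Suc 0) \<longleftrightarrow> i = j"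
  using var1_inj by simp

lemma syzp_add: "1 \<le> k \<Longrightarrow> x \<in> syz_piece n k d \<Longrightarrow> y \<in> syz_piece n k d \<Longrightarrow> x + y \<in> syz_piece n k d"
proof -
  assume k: "1 \<le> k" and x: "x \<in> syz_piece n k d" and y: "y \<in> syz_piece n k d"
  obtain a where a: "a \<in> GF n k (d - int k)" "Phi n k a = x" using x syz_piece_char[OF k] by blast
  obtain b where b: "b \<in> GF n k (d - int k)" "Phi n k b = y" using y syz_piece_char[OF k] by blast
  have "a + b \<in> GF n k (d - int k)" using a b by (intro GF_add) auto
  moreover have "Phi n k (a + b) = x + y" using a b by (simp add: Phi_add)
  ultimately show ?thesis using syz_piece_char[OF k] by blast
qed

lemma syzp_scale: "1 \<le> k \<Longrightarrow> x \<in> syz_piece n k d \<Longrightarrow> (\<lambda>I. mpConst c * x I) \<in> syz_piece n k d"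
proof -
  assume k: "1 \<le> k" and x: "x \<in> syz_piece n k d"
  obtain a where a: "a \<in> GF n k (d - int k)" "Phi n k a = x" using x syz_piece_char[OF k] by blast
  have "(\<lambda>J. mpConst c * a J) \<in> GF n k (d - int k)" using a by (intro GF_scale) auto
  moreover have "Phi n k (\<lambda>J. mpConst c * a J) = (\<lambda>I. mpConst c * x I)" using a by (simp add: Phi_scale)
  ultimately show ?thesis using syz_piece_char[OF k] by blast
qed

lemma syzp_low:
  assumes k: "1 \<le> k" and d: "d < int k" and x: "x \<in> syz_piece n k d"
  shows "x = (0 :: nat set \<Rightarrow> 'a::field mpoly)"
proof -
  obtain a where a: "a \<in> GF n k (d - int k)" "Phi n k a = x" using x syz_piece_char[OF k] by blast
  have "a J = 0" for J using a d homog_neg[of "d - int k" "a J"] by (simp add: GF_def)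
  then have "a = 0" by (simp add: fun_eq_iff)
  then show ?thesis using a by simp
qed

lemma mon_deg1:
  assumes "mon_deg w = 1"
  shows "\<exists>j. w = var1 j"
proof -
  have "Poly_Mapping.keys w \<noteq> {}" using assms by (auto simp: mon_deg_def)
  then obtain j where j: "j \<in> Poly_Mapping.keys w" by blast
  have s: "(\<Sum>i\<in>Poly_Mapping.keys w. Poly_Mapping.lookup w i) = 1" using assms by (simp add: mon_deg_def)
  have "(\<Sum>i\<in>Poly_Mapping.keys w. Poly_Mapping.lookup w i) = Poly_Mapping.lookup w j + (\<Sum>i\<in>Poly_Mapping.keys w - {j}. Poly_Mapping.lookup w i)"
    using j by (simp add: sum.remove)
  moreover have "Poly_Mapping.lookup w j \<ge> 1" using j by (simp add: in_keys_iff)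
  ultimately have lj: "Poly_Mapping.lookup w j = 1" and rest: "(\<Sum>i\<in>Poly_Mapping.keys w - {j}. Poly_Mapping.lookup w i) = 0"
    using s by linarith+
  have "Poly_Mapping.lookup w i = 0" if "i \<noteq> j" for i
  proof (cases "i \<in> Poly_Mapping.keys w")
    case True
    then show ?thesis using rest that by (simp add: sum_eq_0_iff)
  qed (simp add: in_keys_iff)
  then have "w = var1 j"
    by (intro poly_mapping_eqI) (auto simp: lookup_single when_def lj)
  then show ?thesis by blast
qed

lemma lin_expand:
  assumes h: "homog 1 p" and s: "supp_in A p" and fA: "finite A"
  shows "p = (\<Sum>i\<in>A. mpConst (Poly_Mapping.lookup p (var1 i)) * mpVar i :: 'a::field mpoly)"
proof (rule poly_mapping_eqI)
  fix w
  have r: "Poly_Mapping.lookup (\<Sum>i\<in>A. mpConst (Poly_Mapping.lookup p (var1 i)) * mpVar i :: 'a mpoly) w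
      = (\<Sum>i\<in>A. (Poly_Mapping.lookup p (var1 i) when var1 i = w))"
    by (simp add: lookup_sum mpConst_mpVar lookup_single)
  show "Poly_Mapping.lookup p w = Poly_Mapping.lookup (\<Sum>i\<in>A. mpConst (Poly_Mapping.lookup p (var1 i)) * mpVar i :: 'a mpoly) w"
  proof (cases "w \<in> Poly_Mapping.keys p")
    case True
    then have "mon_deg w = 1" using h by (auto simp: homog_def)
    then obtain j where wj: "w = var1 j" using mon_deg1 by blast
    have jA: "j \<in> A" using True s wj by (auto simp: supp_in_def)
    have "(\<Sum>i\<in>A. (Poly_Mapping.lookup p (var1 i) when var1 i = w)) = (\<Sum>i\<in>A. if i = j then Poly_Mapping.lookup p w else 0)"
      by (intro sum.cong refl) (auto simp: when_def wj var1_inj var1_inj')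
    also have "\<dots> = Poly_Mapping.lookup p w" using jA fA by simp
    finally show ?thesis using r by simp
  next
    case False
    then have "(\<Sum>i\<in>A. (Poly_Mapping.lookup p (var1 i) when var1 i = w)) = 0"
      by (intro sum.neutral) (auto simp: when_def in_keys_iff)
    then show ?thesis using r False by (simp add: in_keys_iff)
  qed
qed



lemma Phi_decomp: "Phi n k a = (\<Sum>J\<in>Ks n k. Phi n k (dl J (a J)))"
proof -
  have "Phi n k a = Phi n k (\<Sum>J\<in>Ks n k. dl J (a J))"
  proof (rule Phi_cong)
    fix J0 assume J0: "J0 \<in> Ks n k"
    have "(\<Sum>J\<in>Ks n k. dl J (a J)) J0 = (\<Sum>J\<in>Ks n k. if J0 = J then a J else 0)"
      by (simp add: sum_fun_apply dl_def)
    also have "\<dots> = a J0" using J0 by (simp add: sum.delta)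
    finally show "a J0 = (\<Sum>J\<in>Ks n k. dl J (a J)) J0" by simp
  qed
  also have "\<dots> = (\<Sum>J\<in>Ks n k. Phi n k (dl J (a J)))" by (rule Phi_sum)
  finally show ?thesis .
qed

lemma dl_apply: "dl J q J' = (if J' = J then q else 0)"
  by (simp add: dl_def)

lemma dl_scale: "dl J (mpConst c * q) = (\<lambda>J'. mpConst c * dl J q J')"
  by (rule ext) (simp add: dl_def)

definition Pairs :: "nat \<Rightarrow> nat \<Rightarrow> (nat set \<times> nat) set" where
  "Pairs n k = {(J, i). J \<in> Ks n k \<and> Min J \<le> i \<and> i < n}"

definition Sk1 :: "nat \<Rightarrow> nat \<Rightarrow> (nat set \<Rightarrow> 'a::field mpoly) set" where
  "Sk1 n k = (\<lambda>(J, i). Phi n k (dl J (mpVar i))) ` Pairs n k"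

lemma finite_Pairs: "finite (Pairs n k)"
  by (rule finite_subset[of _ "Ks n k \<times> {..<n}"]) (auto simp: Pairs_def)

lemma Sk1_sub:
  assumes k: "1 \<le> k"
  shows "Sk1 n k \<subseteq> (syz_piece n k (int k + 1) :: (nat set \<Rightarrow> 'a::field mpoly) set)"
proof
  fix v :: "nat set \<Rightarrow> 'a mpoly" assume "v \<in> Sk1 n k"
  then obtain J i where Ji: "(J, i) \<in> Pairs n k" and v: "v = Phi n k (dl J (mpVar i))"
    by (auto simp: Sk1_def)
  have J: "J \<in> Ks n k" and i: "Min J \<le> i" "i < n" using Ji by (auto simp: Pairs_def)
  have "supp_in {Min J..<n} (mpVar i :: 'a mpoly)" using i by (intro supp_in_mpVar) simp
  then have "dl J (mpVar i :: 'a mpoly) \<in> GFa n k" by (rule dl_in_GFa[OF J])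
  moreover have "\<forall>J'. homog (int k + 1 - int k) (dl J (mpVar i :: 'a mpoly) J')"
    by (simp add: dl_def homog_mpVar)
  ultimately have "dl J (mpVar i :: 'a mpoly) \<in> GF n k (int k + 1 - int k)"
    unfolding GF_def by blast
  then show "v \<in> syz_piece n k (int k + 1)" using syz_piece_char[OF k] v by blast
qed

lemma span_k1:
  assumes k: "1 \<le> k"
  shows "(syz_piece n k (int k + 1) :: (nat set \<Rightarrow> 'a::field mpoly) set) \<subseteq> VF.span (Sk1 n k)"
proof
  fix v :: "nat set \<Rightarrow> 'a mpoly" assume v: "v \<in> syz_piece n k (int k + 1)"
  obtain b where b: "b \<in> GF n k 1" and vb: "Phi n k b = v"
    using v syz_piece_char[OF k, of v n "int k + 1"] by auto
  have "v = (\<Sum>J\<in>Ks n k. Phi n k (dl J (b J)))" unfolding vb[symmetric] by (rule Phi_decomp)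
  also have "\<dots> \<in> VF.span (Sk1 n k)"
  proof (rule VF.span_sum)
    fix J assume J: "J \<in> Ks n k"
    have bJ: "homog 1 (b J)" "supp_in {Min J..<n} (b J)" using b J unfolding GF_def GFa_def by blast+
    have "b J = (\<Sum>i\<in>{Min J..<n}. mpConst (Poly_Mapping.lookup (b J) (var1 i)) * mpVar i)"
      by (rule lin_expand[OF bJ]) simp
    then have "Phi n k (dl J (b J)) = Phi n k (dl J (\<Sum>i\<in>{Min J..<n}. mpConst (Poly_Mapping.lookup (b J) (var1 i)) * mpVar i))"
      by simp
    also have "\<dots> = (\<Sum>i\<in>{Min J..<n}. Phi n k (dl J (mpConst (Poly_Mapping.lookup (b J) (var1 i)) * mpVar i)))"
      by (simp only: dl_sum Phi_sum)
    also have "\<dots> = (\<Sum>i\<in>{Min J..<n}. (\<lambda>I. mpConst (Poly_Mapping.lookup (b J) (var1 i)) * Phi n k (dl J (mpVar i)) I))"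
      by (simp add: dl_scale Phi_scale)
    also have "\<dots> \<in> VF.span (Sk1 n k)"
    proof (rule VF.span_sum)
      fix i assume i: "i \<in> {Min J..<n}"
      have "Phi n k (dl J (mpVar i)) \<in> Sk1 n k"
        unfolding Sk1_def Pairs_def using J i by (intro image_eqI[of _ _ "(J, i)"]) auto
      then have "Phi n k (dl J (mpVar i)) \<in> VF.span (Sk1 n k)" by (rule VF.span_base)
      then show "(\<lambda>I. mpConst (Poly_Mapping.lookup (b J) (var1 i)) * Phi n k (dl J (mpVar i)) I) \<in> VF.span (Sk1 n k)"
        by (rule VF.span_scale)
    qed
    finally show "Phi n k (dl J (b J)) \<in> VF.span (Sk1 n k)" .
  qed
  finally show "v \<in> VF.span (Sk1 n k)" .
qed

lemma card_pairs:
  assumes k: "1 \<le> k"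
  shows "card (Pairs n k) + (n choose (k + 1)) = n * (n choose k)"
proof -
  define Comp where "Comp = {(J, i). J \<in> Ks n k \<and> i < Min J}"
  have neK: "J \<in> Ks n k \<Longrightarrow> J \<noteq> {}" for J using k by (auto simp: Ks_def)
  have MinK: "Min J < n" if J: "J \<in> Ks n k" for J
  proof -
    have "Min J \<in> J" using Min_in[OF Ks_finite[OF J] neK[OF J]] .
    then show ?thesis using J unfolding Ks_def by blast
  qed
  have un: "Ks n k \<times> {..<n} = Pairs n k \<union> Comp"
  proof (intro equalityI subsetI)
    fix p assume p: "p \<in> Ks n k \<times> {..<n}"
    obtain J i where pJ: "p = (J, i)" by fastforce
    show "p \<in> Pairs n k \<union> Comp"
    proof (cases "Min J \<le> i")
      case True then show ?thesis using p pJ unfolding Pairs_def by simp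
    next
      case False then show ?thesis using p pJ unfolding Comp_def by simp
    qed
  next
    fix p assume p: "p \<in> Pairs n k \<union> Comp"
    obtain J i where pJ: "p = (J, i)" by fastforce
    show "p \<in> Ks n k \<times> {..<n}"
    proof (cases "p \<in> Pairs n k")
      case True then show ?thesis using pJ unfolding Pairs_def by simp
    next
      case False
      then have "J \<in> Ks n k" "i < Min J" using p pJ unfolding Comp_def by simp_all
      then show ?thesis using pJ MinK by fastforce
    qed
  qed
  have dis: "Pairs n k \<inter> Comp = {}" by (auto simp: Pairs_def Comp_def)
  have fC: "finite Comp" by (rule finite_subset[of _ "Ks n k \<times> {..<n}"]) (use un in blast, simp)
  have "card (Ks n k \<times> {..<n}) = card (Pairs n k) + card Comp"
    unfolding un using dis fC finite_Pairs by (simp add: card_Un_disjoint)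
  moreover have "card (Ks n k \<times> {..<n}) = (n choose k) * n" by (simp add: card_cartesian_product card_Ks)
  moreover have "card Comp = card (Ks n (k + 1))"
  proof (rule bij_betw_same_card[of "\<lambda>(J, i). insert i J"], rule bij_betw_byWitness[of _ "\<lambda>L. (L - {Min L}, Min L)"])
    show "\<forall>a\<in>Comp. (\<lambda>L. (L - {Min L}, Min L)) ((\<lambda>(J, i). insert i J) a) = a"
    proof
      fix a assume "a \<in> Comp"
      moreover obtain J i where a: "a = (J, i)" by fastforce
      ultimately have J: "J \<in> Ks n k" and i: "i < Min J" by (simp_all add: Comp_def)
      have fJ: "finite J" using J by (rule Ks_finite)
      have iJ: "x \<in> J \<Longrightarrow> i < x" for x using i fJ by (meson Min_le less_le_trans)
      have m: "Min (insert i J) = i" using fJ iJ by (intro Min_eqI) (auto simp: less_imp_le)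
      have "i \<notin> J" using iJ by blast
      then have "insert i J - {i} = J" by simp
      then show "(\<lambda>L. (L - {Min L}, Min L)) ((\<lambda>(J, i). insert i J) a) = a" using a m by simp
    qed
    show "\<forall>a'\<in>Ks n (k + 1). (\<lambda>(J, i). insert i J) ((\<lambda>L. (L - {Min L}, Min L)) a') = a'"
    proof
      fix L assume L: "L \<in> Ks n (k + 1)"
      have "card L = k + 1" using L unfolding Ks_def by simp
      then have "L \<noteq> {}" by auto
      then have mL: "Min L \<in> L" using Ks_finite[OF L] by simp
      show "(\<lambda>(J, i). insert i J) ((\<lambda>L. (L - {Min L}, Min L)) L) = L" using mL by (simp add: insert_absorb)
    qed
    show "(\<lambda>(J, i). insert i J) ` Comp \<subseteq> Ks n (k + 1)"
    proof
      fix L assume "L \<in> (\<lambda>(J, i). insert i J) ` Comp"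
      then obtain a where a: "a \<in> Comp" and La: "L = (\<lambda>(J, i). insert i J) a" by blast
      obtain J i where aJ: "a = (J, i)" by fastforce
      have J: "J \<in> Ks n k" and i: "i < Min J" using a aJ by (simp_all add: Comp_def)
      have L: "L = insert i J" using La aJ by simp
      have fJ: "finite J" using J by (rule Ks_finite)
      have iJ: "x \<in> J \<Longrightarrow> i < x" for x using i fJ by (meson Min_le less_le_trans)
      have "i \<notin> J" using iJ by blast
      moreover have "i < n" using i MinK[OF J] by simp
      ultimately show "L \<in> Ks n (k + 1)" using J fJ by (auto simp: Ks_def L)
    qed
    show "(\<lambda>L. (L - {Min L}, Min L)) ` Ks n (k + 1) \<subseteq> Comp"
    proof
      fix a assume "a \<in> (\<lambda>L. (L - {Min L}, Min L)) ` Ks n (k + 1)"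
      then obtain L where a: "a = (L - {Min L}, Min L)" and L: "L \<in> Ks n (k + 1)" by blast
      have fL: "finite L" using L by (rule Ks_finite)
      have cL: "card L = k + 1" and Ln: "L \<subseteq> {..<n}" using L by (auto simp: Ks_def)
      have neL: "L \<noteq> {}" using cL by auto
      have mL: "Min L \<in> L" using fL neL by simp
      have c: "card (L - {Min L}) = k" using cL mL fL by simp
      have ne: "L - {Min L} \<noteq> {}"
      proof
        assume e: "L - {Min L} = {}"
        have "card (L - {Min L}) = 0" unfolding e by (rule card.empty)
        then show False using c k by simp
      qed
      have "Min (L - {Min L}) \<in> L - {Min L}" using Min_in[of "L - {Min L}"] fL ne by blast
      moreover have "Min L \<le> Min (L - {Min L})" using fL ne by simp
      ultimately have "Min L < Min (L - {Min L})" by (metis DiffD2 insertI1 le_neq_implies_less)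
      then show "a \<in> Comp" unfolding a Comp_def Ks_def using c Ln by auto
    qed
  qed
  ultimately show ?thesis by (simp add: card_Ks mult.commute)
qed

lemma GFa_sum: "(\<And>x. x \<in> S \<Longrightarrow> f x \<in> GFa n k) \<Longrightarrow> (\<Sum>x\<in>S. f x) \<in> GFa n k"
proof (induction S rule: infinite_finite_induct)
  case (infinite A) then show ?case using GFa_0 by (simp only: sum.infinite[OF infinite(1)])
next
  case empty then show ?case using GFa_0 by (simp only: sum.empty)
next
  case (insert x F)
  have "f x \<in> GFa n k" "sum f F \<in> GFa n k" using insert by auto
  then have "f x + sum f F \<in> GFa n k" by (rule GFa_add)
  then show ?case by (subst sum.insert[OF insert(1,2)])
qed

definition Ek :: "nat \<Rightarrow> nat \<Rightarrow> (nat set \<Rightarrow> 'a::field mpoly) set" where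
  "Ek n k = (\<lambda>J. Phi n k (dl J 1)) ` Ks n k"

lemma dl1_GF: "J \<in> Ks n k \<Longrightarrow> dl J (1::'a::field mpoly) \<in> GF n k 0"
  unfolding GF_def using dl_in_GFa[of J n k "1::'a mpoly"]
  by (auto simp: dl_def supp_in_def homog_def)

lemma Ek_sub: "1 \<le> k \<Longrightarrow> Ek n k \<subseteq> (syz_piece n k (int k) :: (nat set \<Rightarrow> 'a::field mpoly) set)"
proof
  fix v :: "nat set \<Rightarrow> 'a mpoly"
  assume k: "1 \<le> k" and "v \<in> Ek n k"
  then obtain J where J: "J \<in> Ks n k" and v: "v = Phi n k (dl J 1)" by (auto simp: Ek_def)
  have "dl J 1 \<in> GF n k (int k - int k)" using dl1_GF[OF J] by simp
  then show "v \<in> syz_piece n k (int k)" using syz_piece_char[OF k] v by blast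
qed

lemma Ek_inj: "1 \<le> k \<Longrightarrow> inj_on (\<lambda>J. Phi n k (dl J (1::'a::field mpoly))) (Ks n k)"
proof (rule inj_onI)
  fix J J' assume k: "1 \<le> k" and J: "J \<in> Ks n k" and J': "J' \<in> Ks n k"
    and eq: "Phi n k (dl J (1::'a mpoly)) = Phi n k (dl J' 1)"
  have "dl J (1::'a mpoly) = dl J' 1"
    using GFa_uniq[OF k _ _ eq] dl1_GF[OF J] dl1_GF[OF J'] by (auto simp: GF_def)
  then have "dl J (1::'a mpoly) J = dl J' 1 J" by simp
  then show "J = J'" by (auto simp: dl_def split: if_splits)
qed

lemma Ek_card: "1 \<le> k \<Longrightarrow> card (Ek n k :: (nat set \<Rightarrow> 'a::field mpoly) set) = n choose k"
  unfolding Ek_def using card_image[OF Ek_inj[where 'a='a]] card_Ks by metis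

lemma Ek_indep:
  assumes k: "1 \<le> k"
  shows "VF.independent (Ek n k :: (nat set \<Rightarrow> 'a::field mpoly) set)"
  unfolding VF.independent_explicit_finite_subsets
proof (intro allI impI ballI)
  let ?phi = "\<lambda>J. Phi n k (dl J (1::'a mpoly))"
  fix S :: "(nat set \<Rightarrow> 'a mpoly) set" and u w
  assume S: "S \<subseteq> Ek n k" and fS: "finite S" and sum0: "(\<Sum>v\<in>S. (\<lambda>i. mpConst (u v) * v i)) = 0" and w: "w \<in> S"
  define T where "T = {J\<in>Ks n k. ?phi J \<in> S}"
  have TK: "T \<subseteq> Ks n k" unfolding T_def by blast
  have injT: "inj_on ?phi T" using inj_on_subset[OF Ek_inj[OF k] TK] .
  have ST: "S = ?phi ` T"
  proof (intro equalityI subsetI)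
    fix v assume v: "v \<in> S"
    then have "v \<in> ?phi ` Ks n k" using S unfolding Ek_def by blast
    then obtain J where "J \<in> Ks n k" "v = ?phi J" by blast
    then show "v \<in> ?phi ` T" using v unfolding T_def by blast
  next
    fix v assume "v \<in> ?phi ` T" then show "v \<in> S" unfolding T_def by blast
  qed
  have fT: "finite T" using finite_subset[OF TK finite_Ks] .
  define beta where "beta = (\<Sum>J\<in>T. dl J (mpConst (u (?phi J))))"
  have "(\<Sum>v\<in>S. (\<lambda>i. mpConst (u v) * v i)) = (\<Sum>J\<in>T. (\<lambda>i. mpConst (u (?phi J)) * ?phi J i))"
    unfolding ST by (subst sum.reindex[OF injT]) simp
  also have "\<dots> = (\<Sum>J\<in>T. Phi n k (dl J (mpConst (u (?phi J)))))"
  proof (rule sum.cong[OF refl])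
    fix J show "(\<lambda>i. mpConst (u (?phi J)) * ?phi J i) = Phi n k (dl J (mpConst (u (?phi J))))"
      using dl_scale[of J "u (?phi J)" "1::'a mpoly"] Phi_scale[of n k "u (?phi J)" "dl J 1"] by simp
  qed
  also have "\<dots> = Phi n k beta" unfolding beta_def by (rule Phi_sum[symmetric])
  finally have z: "Phi n k beta = 0" using sum0 by simp
  have bG: "beta \<in> GFa n k" unfolding beta_def
  proof (rule GFa_sum)
    fix J assume "J \<in> T" then have "J \<in> Ks n k" using TK by blast
    then show "dl J (mpConst (u (?phi J))) \<in> GFa n k" by (rule dl_in_GFa) (rule supp_in_mpConst)
  qed
  have all0: "\<forall>J\<in>Ks n k. beta J = 0"
    by (rule IND[OF k _ z]) (use bG in \<open>simp add: GFa_def\<close>)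
  obtain J where JT: "J \<in> T" and wJ: "w = ?phi J" using w ST by blast
  have "beta J = (\<Sum>J'\<in>T. if J = J' then mpConst (u (?phi J')) else 0)"
    unfolding beta_def by (simp only: sum_fun_apply dl_apply eq_commute[of J])
  also have "\<dots> = mpConst (u (?phi J))" using JT fT by (simp add: sum.delta)
  finally have "mpConst (u (?phi J)) = 0" using all0 JT TK by auto
  then show "u w = 0" using wJ by simp
qed



definition ev :: "nat \<Rightarrow> 'a::field mpoly \<Rightarrow> nat \<Rightarrow> 'a mpoly" where
  "ev i p = (\<lambda>j. if j = i then p else 0)"

lemma ev_apply: "ev i p j = (if j = i then p else 0)" by (simp add: ev_def)

lemma gr_0: "graded_retract n S \<Longrightarrow> 0 \<in> S"
  unfolding graded_retract_def using ag_0 by blast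
lemma gr_1: "graded_retract n S \<Longrightarrow> 1 \<in> S"
  unfolding graded_retract_def using ag_1 by blast
lemma piece_0: "graded_retract n S \<Longrightarrow> 0 \<in> piece S e"
  unfolding piece_def using gr_0 by simp
lemma piece_1:
  fixes S :: "'a::field mpoly set"
  shows "graded_retract n S \<Longrightarrow> 1 \<in> piece S 0"
  unfolding piece_def using gr_1 homog_mpConst[of "1::'a"] by simp

lemma binom_id: "k \<le> n \<Longrightarrow> (n choose (k + 1)) * (k + 1) = (n - k) * (n choose k)"
proof (cases n)
  case 0
  assume "k \<le> n" then show ?thesis using 0 by simp
next
  case (Suc m)
  have "Suc m * (m choose k) = (Suc m choose Suc k) * Suc k" by (rule Suc_times_binomial_eq)
  moreover have "(Suc m - k) * (Suc m choose k) = Suc m * ((Suc m - 1) choose k)" by (rule binomial_absorb_comp)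
  ultimately show ?thesis using Suc by simp
qed



lemma hd_f:
  fixes D :: "('a::field mpoly set \<times> int) list"
  assumes hd: "hilbert_decomp n k D"
  obtains f where "bij_betw f (syz_piece n k d) (dsum_piece D d)"
    "\<forall>x\<in>syz_piece n k d. \<forall>y\<in>syz_piece n k d. f (\<lambda>I. x I + y I) = (\<lambda>i. f x i + f y i)"
    "\<forall>c. \<forall>x\<in>syz_piece n k d. f (\<lambda>I. mpConst c * x I) = (\<lambda>i. mpConst c * f x i)"
proof -
  have "\<forall>d::int. \<exists>f. bij_betw f (syz_piece n k d) (dsum_piece D d) \<and>
        (\<forall>x\<in>syz_piece n k d. \<forall>y\<in>syz_piece n k d. f (\<lambda>I. x I + y I) = (\<lambda>i. f x i + f y i)) \<and>
        (\<forall>c. \<forall>x\<in>syz_piece n k d. f (\<lambda>I. mpConst c * x I) = (\<lambda>i. mpConst c * f x i))"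
    using hd unfolding hilbert_decomp_def by (rule conjunct2)
  then have "\<exists>f. bij_betw f (syz_piece n k d) (dsum_piece D d) \<and>
        (\<forall>x\<in>syz_piece n k d. \<forall>y\<in>syz_piece n k d. f (\<lambda>I. x I + y I) = (\<lambda>i. f x i + f y i)) \<and>
        (\<forall>c. \<forall>x\<in>syz_piece n k d. f (\<lambda>I. mpConst c * x I) = (\<lambda>i. mpConst c * f x i))"
    by (rule spec)
  then show ?thesis by (elim exE conjE) (rule that)
qed

lemma hd_gr:
  fixes D :: "('a::field mpoly set \<times> int) list"
  assumes hd: "hilbert_decomp n k D" and i: "i < length D"
  shows "graded_retract n (fst (D ! i))"
proof -
  have "\<forall>i<length D. graded_retract n (fst (D ! i))" using hd unfolding hilbert_decomp_def by (rule conjunct1)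
  then show ?thesis using i by simp
qed

lemma no_low:
  fixes D :: "('a::field mpoly set \<times> int) list"
  assumes k: "1 \<le> k" and hd: "hilbert_decomp n k D" and i: "i < length D"
  shows "int k \<le> snd (D ! i)"
proof (rule ccontr)
  assume "\<not> int k \<le> snd (D ! i)"
  then have lt: "snd (D ! i) < int k" by simp
  define d where "d = snd (D ! i)"
  obtain f where bij: "bij_betw f (syz_piece n k d) (dsum_piece D d)"
    and "\<forall>x\<in>syz_piece n k d. \<forall>y\<in>syz_piece n k d. f (\<lambda>I. x I + y I) = (\<lambda>i. f x i + f y i)"
    and "\<forall>c. \<forall>x\<in>syz_piece n k d. f (\<lambda>I. mpConst c * x I) = (\<lambda>i. mpConst c * f x i)"
    by (rule hd_f[OF hd])
  have sz: "syz_piece n k d = {0 :: nat set \<Rightarrow> 'a mpoly}"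
  proof (intro equalityI subsetI)
    fix x :: "nat set \<Rightarrow> 'a mpoly" assume "x \<in> syz_piece n k d"
    then have "x = 0" using syzp_low[OF k] lt d_def by blast
    then show "x \<in> {0}" by simp
  next
    fix x :: "nat set \<Rightarrow> 'a mpoly" assume "x \<in> {0}"
    then show "x \<in> syz_piece n k d" using syzp_0[OF k] by simp
  qed
  have "dsum_piece D d = f ` syz_piece n k d" using bij by (simp add: bij_betw_def)
  then have ds: "dsum_piece D d = {f 0}" using sz by simp
  have "ev i 1 \<in> dsum_piece D d"
    unfolding dsum_piece_def
  proof (intro CollectI conjI allI impI)
    fix j assume j: "j < length D"
    show "ev i 1 j \<in> piece (fst (D ! j)) (d - snd (D ! j))"
    proof (cases "j = i")
      case True then show ?thesis using piece_1[OF hd_gr[OF hd j]] by (simp add: ev_apply d_def)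
    next
      case False then show ?thesis using piece_0[OF hd_gr[OF hd j]] by (simp add: ev_apply)
    qed
  next
    fix j assume "length D \<le> j" then show "ev i 1 j = 0" using i by (simp add: ev_apply)
  qed
  moreover have "(0 :: nat \<Rightarrow> 'a mpoly) \<in> dsum_piece D d"
    unfolding dsum_piece_def using piece_0[OF hd_gr[OF hd]] by simp
  ultimately have "ev i (1::'a mpoly) = 0" using ds by simp
  then have "ev i (1::'a mpoly) i = 0 i" by simp
  then show False by (simp add: ev_apply)
qed

lemma span_k:
  fixes D :: "('a::field mpoly set \<times> int) list"
  assumes k: "1 \<le> k" and hd: "hilbert_decomp n k D"
  shows "dsum_piece D (int k) \<subseteq> VF.span ((\<lambda>i. ev i (1::'a mpoly)) ` {i. i < length D \<and> snd (D ! i) = int k})"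
proof
  fix g assume g: "g \<in> dsum_piece D (int k)"
  define Q where "Q = {i. i < length D \<and> snd (D ! i) = int k}"
  have fQ: "finite Q" unfolding Q_def by simp
  define c where "c i = Poly_Mapping.lookup (g i) 0" for i
  have gj: "g j = (if j \<in> Q then mpConst (c j) else 0)" for j
  proof (cases "j < length D")
    case True
    have p: "g j \<in> piece (fst (D ! j)) (int k - snd (D ! j))" using g True unfolding dsum_piece_def by blast
    then have h: "homog (int k - snd (D ! j)) (g j)" unfolding piece_def by blast
    show ?thesis
    proof (cases "snd (D ! j) = int k")
      case True
      then have "homog 0 (g j)" using h by simp
      then have "g j = mpConst (c j)" unfolding c_def by (rule homog0_const)
      then show ?thesis using True \<open>j < length D\<close> by (simp add: Q_def)
    next
      case False
      then have "int k - snd (D ! j) < 0" using no_low[OF k hd \<open>j < length D\<close>] by simp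
      then have "g j = 0" using h by (rule homog_neg)
      then show ?thesis using False by (simp add: Q_def)
    qed
  next
    case False
    then have "g j = 0" using g unfolding dsum_piece_def by simp
    then show ?thesis using False by (simp add: Q_def)
  qed
  have "g = (\<Sum>i\<in>Q. (\<lambda>j. mpConst (c i) * ev i 1 j))"
  proof
    fix j
    have "(\<Sum>i\<in>Q. (\<lambda>j. mpConst (c i) * ev i (1::'a mpoly) j)) j = (\<Sum>i\<in>Q. if i = j then mpConst (c i) else 0)"
      unfolding sum_fun_apply by (intro sum.cong refl) (simp add: ev_apply)
    also have "\<dots> = (if j \<in> Q then mpConst (c j) else 0)" using fQ by (simp add: sum.delta)
    finally show "g j = (\<Sum>i\<in>Q. (\<lambda>j. mpConst (c i) * ev i 1 j)) j" using gj by simp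
  qed
  also have "\<dots> \<in> VF.span ((\<lambda>i. ev i (1::'a mpoly)) ` Q)"
  proof (rule VF.span_sum)
    fix i assume "i \<in> Q"
    then have "ev i (1::'a mpoly) \<in> VF.span ((\<lambda>i. ev i (1::'a mpoly)) ` Q)" by (intro VF.span_base imageI)
    then show "(\<lambda>j. mpConst (c i) * ev i 1 j) \<in> VF.span ((\<lambda>i. ev i (1::'a mpoly)) ` Q)" by (rule VF.span_scale)
  qed
  finally show "g \<in> VF.span ((\<lambda>i. ev i (1::'a mpoly)) ` {i. i < length D \<and> snd (D ! i) = int k})" unfolding Q_def .
qed

lemma count_k:
  fixes D :: "('a::field mpoly set \<times> int) list"
  assumes k: "1 \<le> k" and hd: "hilbert_decomp n k D"
  shows "n choose k \<le> card {i. i < length D \<and> snd (D ! i) = int k}"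
proof -
  define Q where "Q = {i. i < length D \<and> snd (D ! i) = int k}"
  let ?V = "syz_piece n k (int k) :: (nat set \<Rightarrow> 'a mpoly) set"
  obtain f where bij: "bij_betw f ?V (dsum_piece D (int k))"
    and fadd: "\<forall>x\<in>?V. \<forall>y\<in>?V. f (\<lambda>I. x I + y I) = (\<lambda>i. f x i + f y i)"
    and fsc: "\<forall>c. \<forall>x\<in>?V. f (\<lambda>I. mpConst c * x I) = (\<lambda>i. mpConst c * f x i)"
    by (rule hd_f[OF hd])
  have inj: "inj_on f ?V" using bij by (rule bij_betw_imp_inj_on)
  have EV: "Ek n k \<subseteq> ?V" by (rule Ek_sub[OF k])
  have ind: "VF.independent (f ` Ek n k)"
    by (rule transfer_indep[OF syzp_0[OF k] syzp_add[OF k] syzp_scale[OF k] fadd fsc inj EV Ek_indep[OF k]])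
  have "f ` Ek n k \<subseteq> f ` ?V" using EV by blast
  also have "\<dots> = dsum_piece D (int k)" using bij by (simp add: bij_betw_def)
  also have "\<dots> \<subseteq> VF.span ((\<lambda>i. ev i (1::'a mpoly)) ` Q)" unfolding Q_def by (rule span_k[OF k hd])
  finally have sub: "f ` Ek n k \<subseteq> VF.span ((\<lambda>i. ev i (1::'a mpoly)) ` Q)" .
  have fQ: "finite Q" unfolding Q_def by simp
  have "card (f ` Ek n k) \<le> card ((\<lambda>i. ev i (1::'a mpoly)) ` Q)"
    using VF.independent_span_bound[OF finite_imageI[OF fQ] ind sub] by blast
  also have "\<dots> \<le> card Q" using fQ by (rule card_image_le)
  finally have "card (f ` Ek n k) \<le> card Q" .
  moreover have "card (f ` Ek n k) = card (Ek n k :: (nat set \<Rightarrow> 'a mpoly) set)"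
    using inj_on_subset[OF inj EV] by (rule card_image)
  ultimately show ?thesis using Ek_card[OF k, where 'a='a] unfolding Q_def by simp
qed

lemma count_k1:
  fixes D :: "('a::field mpoly set \<times> int) list"
  assumes k: "1 \<le> k" and hd: "hilbert_decomp n k D"
  shows "(\<Sum>i\<in>{i. i < length D \<and> snd (D ! i) = int k}. retract_dim (fst (D ! i))) \<le> card (Pairs n k)"
proof -
  define Q where "Q = {i. i < length D \<and> snd (D ! i) = int k}"
  have fQ: "finite Q" unfolding Q_def by simp
  let ?V = "syz_piece n k (int k + 1) :: (nat set \<Rightarrow> 'a mpoly) set"
  obtain f where bij: "bij_betw f ?V (dsum_piece D (int k + 1))"
    and fadd: "\<forall>x\<in>?V. \<forall>y\<in>?V. f (\<lambda>I. x I + y I) = (\<lambda>i. f x i + f y i)"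
    and fsc: "\<forall>c. \<forall>x\<in>?V. f (\<lambda>I. mpConst c * x I) = (\<lambda>i. mpConst c * f x i)"
    by (rule hd_f[OF hd])
  have span1: "dsum_piece D (int k + 1) \<subseteq> VF.span (f ` Sk1 n k)"
  proof
    fix g assume "g \<in> dsum_piece D (int k + 1)"
    then have "g \<in> f ` ?V" using bij by (simp add: bij_betw_def)
    then obtain v where v: "v \<in> ?V" and gv: "g = f v" by blast
    have "v \<in> VF.span (Sk1 n k)" using span_k1[OF k] v by blast
    then obtain t r where t: "finite t" "t \<subseteq> Sk1 n k" and vt: "v = (\<Sum>a\<in>t. (\<lambda>i. mpConst (r a) * a i))"
      unfolding VF.span_explicit by blast
    have tV: "t \<subseteq> ?V" using t(2) Sk1_sub[OF k] by blast
    have "f v = (\<Sum>a\<in>t. (\<lambda>i. mpConst (r a) * f a i))"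
      unfolding vt using lin_sum[OF syzp_0[OF k] syzp_add[OF k] syzp_scale[OF k] fadd fsc t(1) tV] by blast
    also have "\<dots> \<in> VF.span (f ` Sk1 n k)"
    proof (rule VF.span_sum)
      fix a assume "a \<in> t"
      then have "f a \<in> VF.span (f ` Sk1 n k)" using t(2) by (intro VF.span_base imageI) blast
      then show "(\<lambda>i. mpConst (r a) * f a i) \<in> VF.span (f ` Sk1 n k)" by (rule VF.span_scale)
    qed
    finally show "g \<in> VF.span (f ` Sk1 n k)" using gv by simp
  qed
  have "\<forall>i. \<exists>B. B \<subseteq> piece (fst (D ! i)) 1 \<and> VP.independent B \<and> card B = VP.dim (piece (fst (D ! i)) 1)"
  proof
    fix i
    obtain B where "B \<subseteq> piece (fst (D ! i)) 1" "VP.independent B" "card B = VP.dim (piece (fst (D ! i)) 1)"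
      by (rule VP.basis_exists)
    then show "\<exists>B. B \<subseteq> piece (fst (D ! i)) 1 \<and> VP.independent B \<and> card B = VP.dim (piece (fst (D ! i)) 1)" by blast
  qed
  then obtain B where B: "\<And>i. B i \<subseteq> piece (fst (D ! i)) 1" "\<And>i. VP.independent (B i)"
    "\<And>i. card (B i) = VP.dim (piece (fst (D ! i)) 1)"
    by metis
  have B0: "0 \<notin> B i" for i using B(2)[of i] VP.dependent_zero by blast
  define P where "P = Sigma Q B"
  define Psi where "Psi = (\<lambda>(i, b). ev i (b :: 'a mpoly))"
  define A where "A = Psi ` P"
  have injPsi: "inj_on Psi P"
  proof (rule inj_onI)
    fix p q assume p: "p \<in> P" and q: "q \<in> P" and e: "Psi p = Psi q"
    obtain i b where pi: "p = (i, b)" by fastforce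
    obtain j c where qj: "q = (j, c)" by fastforce
    have bB: "b \<in> B i" using p pi by (simp add: P_def)
    have "ev i b i = ev j c i" using e pi qj by (simp add: Psi_def)
    then have "b = (if i = j then c else 0)" by (simp add: ev_apply)
    then have ij: "i = j" and bc: "b = c" using B0[of i] bB by (auto split: if_splits)
    show "p = q" using pi qj ij bc by simp
  qed
  have AD: "A \<subseteq> dsum_piece D (int k + 1)"
  proof
    fix w assume "w \<in> A"
    then obtain i b where ib: "(i, b) \<in> P" and w: "w = ev i b" by (auto simp: A_def Psi_def)
    have iQ: "i \<in> Q" and bB: "b \<in> B i" using ib by (auto simp: P_def)
    have il: "i < length D" and si: "snd (D ! i) = int k" using iQ by (auto simp: Q_def)
    show "w \<in> dsum_piece D (int k + 1)"
      unfolding dsum_piece_def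
    proof (intro CollectI conjI allI impI)
      fix j assume j: "j < length D"
      show "w j \<in> piece (fst (D ! j)) (int k + 1 - snd (D ! j))"
      proof (cases "j = i")
        case True then show ?thesis using B(1)[of i] bB si by (auto simp: w ev_apply)
      next
        case False then show ?thesis using piece_0[OF hd_gr[OF hd j]] by (simp add: w ev_apply)
      qed
    next
      fix j assume "length D \<le> j" then show "w j = 0" using il by (simp add: w ev_apply)
    qed
  qed
  have indA: "VF.independent A"
    unfolding VF.independent_explicit_finite_subsets
  proof (intro allI impI ballI)
    fix T u w assume TA: "T \<subseteq> A" and fT: "finite T" and sum0: "(\<Sum>v\<in>T. (\<lambda>i. mpConst (u v) * v i)) = 0" and w: "w \<in> T"
    obtain i b where ib: "(i, b) \<in> P" and wib: "w = ev i b" using w TA by (auto simp: A_def Psi_def)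
    have bB: "b \<in> B i" using ib by (simp add: P_def)
    define Bi where "Bi = {b' \<in> B i. ev i b' \<in> T}"
    have injev: "inj_on (ev i) Bi"
    proof (rule inj_onI)
      fix x y assume "ev i x = ev i y" then have "ev i x i = ev i y i" by simp
      then show "x = y" by (simp add: ev_apply)
    qed
    have T1: "ev i ` Bi \<subseteq> T" by (auto simp: Bi_def)
    have fBi: "finite Bi" using finite_subset[OF T1 fT] injev finite_image_iff by blast
    have rest: "w' i = 0" if "w' \<in> T - ev i ` Bi" for w'
    proof -
      have "w' \<in> A" using that TA by blast
      then obtain j c where jc: "(j, c) \<in> P" and w': "w' = ev j c" by (auto simp: A_def Psi_def)
      show ?thesis
      proof (cases "j = i")
        case True
        then have "c \<in> Bi" using jc that w' by (auto simp: Bi_def P_def)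
        then have "w' \<in> ev i ` Bi" using w' True by blast
        then show ?thesis using that by blast
      next
        case False then show ?thesis using w' by (simp add: ev_apply)
      qed
    qed
    have "0 = (\<Sum>v\<in>T. (\<lambda>i. mpConst (u v) * v i)) i" using sum0 by simp
    also have "\<dots> = (\<Sum>v\<in>T. mpConst (u v) * v i)" by (simp add: sum_fun_apply)
    also have "\<dots> = (\<Sum>v\<in>ev i ` Bi. mpConst (u v) * v i)"
      using fT T1 rest by (intro sum.mono_neutral_right) auto
    also have "\<dots> = (\<Sum>b'\<in>Bi. mpConst (u (ev i b')) * b')"
      by (subst sum.reindex[OF injev]) (simp add: ev_apply)
    finally have z: "(\<Sum>b'\<in>Bi. mpConst (u (ev i b')) * b') = 0" by simp
    have BiB: "Bi \<subseteq> B i" by (auto simp: Bi_def)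
    have ii: "\<And>S u. S \<subseteq> B i \<Longrightarrow> finite S \<Longrightarrow> (\<Sum>v\<in>S. mpConst (u v) * v) = 0 \<Longrightarrow> \<forall>v\<in>S. u v = 0"
      using B(2)[of i] unfolding VP.independent_explicit_finite_subsets by blast
    have all: "\<forall>b'\<in>Bi. u (ev i b') = 0" using ii[OF BiB fBi, of "\<lambda>b'. u (ev i b')"] z by blast
    have "b \<in> Bi" using bB w wib by (simp add: Bi_def)
    then show "u w = 0" using all wib by simp
  qed
  have fS: "finite (f ` Sk1 n k)" using finite_Pairs by (simp add: Sk1_def)
  have bnd: "finite A \<and> card A \<le> card (f ` Sk1 n k)"
    by (rule VF.independent_span_bound[OF fS indA]) (use AD span1 in blast)
  have "card (f ` Sk1 n k) \<le> card (Sk1 n k :: (nat set \<Rightarrow> 'a mpoly) set)"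
    by (rule card_image_le) (simp add: Sk1_def finite_Pairs)
  also have "\<dots> \<le> card (Pairs n k)" unfolding Sk1_def by (rule card_image_le[OF finite_Pairs])
  finally have cA: "card A \<le> card (Pairs n k)" using bnd by linarith
  have fP: "finite P" using bnd injPsi finite_image_iff unfolding A_def by blast
  have fB: "finite (B i)" if "i \<in> Q" for i
  proof -
    have "B i \<subseteq> snd ` P" using that by (force simp: P_def)
    then show ?thesis using fP finite_subset by blast
  qed
  have "card P = (\<Sum>i\<in>Q. card (B i))" unfolding P_def using fQ fB by (simp add: card_SigmaI)
  moreover have "card A = card P" unfolding A_def using injPsi by (rule card_image)
  moreover have "(\<Sum>i\<in>Q. retract_dim (fst (D ! i))) = (\<Sum>i\<in>Q. card (B i))"
    using B(3) by (simp add: retract_dim_VP)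
  ultimately show ?thesis using cA unfolding Q_def by simp
qed



lemma depth_bound:
  fixes D :: "('a::field mpoly set \<times> int) list"
  assumes k: "1 \<le> k" and kn: "k \<le> n" and hd: "hilbert_decomp n k D"
  shows "(n choose k) * decomp_depth D + (n choose (k + 1)) \<le> n * (n choose k)"
proof -
  define Q where "Q = {i. i < length D \<and> snd (D ! i) = int k}"
  have fQ: "finite Q" unfolding Q_def by simp
  have cQ: "n choose k \<le> card Q" unfolding Q_def by (rule count_k[OF k hd])
  have sQ: "(\<Sum>i\<in>Q. retract_dim (fst (D ! i))) \<le> card (Pairs n k)" unfolding Q_def by (rule count_k1[OF k hd])
  define R where "R = {retract_dim (fst (D ! i)) | i. i < length D}"
  have R: "R = (\<lambda>i. retract_dim (fst (D ! i))) ` {..<length D}" unfolding R_def by auto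
  have fR: "finite R" unfolding R by simp
  have le: "decomp_depth D \<le> retract_dim (fst (D ! i))" if "i \<in> Q" for i
  proof -
    have "retract_dim (fst (D ! i)) \<in> R" using that unfolding R_def Q_def by blast
    then show ?thesis unfolding decomp_depth_def R_def[symmetric] using fR by simp
  qed
  have "(n choose k) * decomp_depth D \<le> card Q * decomp_depth D" using cQ by simp
  also have "\<dots> = (\<Sum>i\<in>Q. decomp_depth D)" by simp
  also have "\<dots> \<le> (\<Sum>i\<in>Q. retract_dim (fst (D ! i)))" using le by (rule sum_mono)
  also have "\<dots> \<le> card (Pairs n k)" by (rule sQ)
  finally have "(n choose k) * decomp_depth D \<le> card (Pairs n k)" .
  then show ?thesis using card_pairs[OF k, of n] by linarith
qed

lemma arith_final:
  fixes C C' dep n k :: nat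
  assumes C: "0 < C" and b: "C * dep + C' \<le> n * C" and id: "C' * (k + 1) = (n - k) * C" and kn: "k \<le> n"
  shows "int dep \<le> int n - \<lceil>real (n - k) / real (k + 1)\<rceil>"
proof -
  have "(C * dep + C') * (k + 1) \<le> n * C * (k + 1)" using b by (rule mult_right_mono) simp
  then have "C * (dep * (k + 1) + (n - k)) \<le> C * (n * (k + 1))"
    using id by (simp add: algebra_simps)
  then have e: "dep * (k + 1) + (n - k) \<le> n * (k + 1)" using C by simp
  then have "real dep * real (k + 1) + real (n - k) \<le> real n * real (k + 1)"
    by (metis of_nat_add of_nat_le_iff of_nat_mult)
  then have "real (n - k) \<le> (real n - real dep) * real (k + 1)" by (simp add: algebra_simps)
  then have "real (n - k) / real (k + 1) \<le> real n - real dep" by (simp add: divide_le_eq)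
  then have "\<lceil>real (n - k) / real (k + 1)\<rceil> \<le> int n - int dep"
    by (simp add: ceiling_le_iff)
  then show ?thesis by simp
qed

theorem proposition3p6:
  fixes n k :: nat
  assumes "1 \<le> k" and "k < n div 2"
  shows "int (Hdepth1_syz TYPE('a::field) n k)
           \<le> int n - \<lceil>real (n - k) / real (k + 1)\<rceil>"
proof -
  have k: "1 \<le> k" using assms(1) .
  have kn: "k \<le> n" using assms(2) by simp
  define Sd where "Sd = {decomp_depth D | D :: ('a mpoly set \<times> int) list. hilbert_decomp n k D}"
  have C: "0 < n choose k" using kn by simp
  have id: "(n choose (k + 1)) * (k + 1) = (n - k) * (n choose k)" using kn by (rule binom_id)
  have bnd: "int x \<le> int n - \<lceil>real (n - k) / real (k + 1)\<rceil> \<and> x \<le> n" if xS: "x \<in> Sd" for x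
  proof -
    obtain D :: "('a mpoly set \<times> int) list" where hd: "hilbert_decomp n k D" and x: "x = decomp_depth D"
      using xS unfolding Sd_def by blast
    have b: "(n choose k) * x + (n choose (k + 1)) \<le> n * (n choose k)"
      using depth_bound[OF k kn hd] x by simp
    have "(n choose k) * x \<le> n * (n choose k)" using b by linarith
    then have "(n choose k) * x \<le> (n choose k) * n" by (simp only: mult.commute)
    then have "x \<le> n" using C by simp
    then show ?thesis using arith_final[OF C b id kn] by simp
  qed
  have ne: "Sd \<noteq> {}" unfolding Sd_def using exists_decomp[OF k, where 'a='a] by blast
  have fin: "finite Sd" using bnd by (intro finite_subset[of Sd "{..n}"]) auto
  have "Max Sd \<in> Sd" using fin ne by (rule Max_in)
  moreover have "Hdepth1_syz TYPE('a) n k = Max Sd" unfolding Hdepth1_syz_def Sd_def ..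
  ultimately show ?thesis using bnd by simp
qed


end
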